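(* Let $\mathcal{P}$ be one of the following three point sets in $\mathbb{R}^3$ (the vertices of a regular tetrahedron, of a regular octahedron, or of a cube, all centred at the origin): (a) $q_1=(1,1,1)$, $q_2=(-1,-1,1)$, $q_3=(-1,1,-1)$, $q_4=(1,-1,-1)$ $(n=4)$; (b) $q_1=(1,0,0)$, $q_2=(-1,0,0)$, $q_3=(0,1,0)$, $q_4=(0,-1,0)$, $q_5=(0,0,1)$, $q_6=(0,0,-1)$ $(n=6)$; (c) the eight points $q_1,\dots,q_8$ of the form $(\pm1,\pm1,\pm1)$ $(n=8)$. For $t\in(0,1)$ consider the configuration of $2n$ points $q_1,\dots,q_n,q_{n+1}=tq_1,\dots,q_{2n}=tq_n$ (two nested homothetic copies of the same polyhedron with ratio of edges $t$). Then in each of the three cases there exists $\delta\in(0,1)$ such that: for every $t\in(0,\delta)$ there exist positive masses $m_1,\dots,m_{2n}$ for which this configuration is a central configuration, and for every $t\in(\delta,1)$ there are no positive masses $m_1,\dots,m_{2n}$ for which this configuration is a central configuration.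
   Context: A configuration $q=(q_1,\dots,q_N)$ of distinct points $q_i\in\mathbb{R}^3$ with masses $m_1,\dots,m_N$ is called a central configuration if there exists a constant $c\in\mathbb{R}$ such that $\sum_{j\neq i} m_j\left(\frac{1}{|q_j-q_i|^3}-c\right)(q_j-q_i)=0$ for all $i=1,\dots,N$. (For nonzero total mass this is equivalent to the existence of $\lambda\in\mathbb{R}$ with $-\lambda(q_i-q_0)=\sum_{j\neq i}m_j\frac{q_j-q_i}{|q_j-q_i|^3}$ for all $i$, where $q_0$ is the center of mass.) *)

theory Defs
  imports "HOL-Analysis.Analysis"
begin

definition central_configuration :: "(real^3) list \<Rightarrow> real list \<Rightarrow> bool" where
  "central_configuration q m \<longleftrightarrow>
     length m = length q \<and> distinct q \<and>
     (\<exists>c::real. \<forall>i<length q.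
        (\<Sum>j\<in>{..<length q} - {i}.
           (m!j * (1 / norm (q!j - q!i) ^ 3 - c)) *\<^sub>R (q!j - q!i)) = 0)"

definition pt :: "real \<Rightarrow> real \<Rightarrow> real \<Rightarrow> real^3" where
  "pt a b c = vector [a, b, c]"

definition tetrahedron :: "(real^3) list" where
  "tetrahedron = [pt 1 1 1, pt (-1) (-1) 1, pt (-1) 1 (-1), pt 1 (-1) (-1)]"

definition octahedron :: "(real^3) list" where
  "octahedron = [pt 1 0 0, pt (-1) 0 0, pt 0 1 0, pt 0 (-1) 0, pt 0 0 1, pt 0 0 (-1)]"

definition cube :: "(real^3) list" where
  "cube = [pt 1 1 1, pt 1 1 (-1), pt 1 (-1) 1, pt 1 (-1) (-1),
           pt (-1) 1 1, pt (-1) 1 (-1), pt (-1) (-1) 1, pt (-1) (-1) (-1)]"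

definition nested :: "(real^3) list \<Rightarrow> real \<Rightarrow> (real^3) list" where
  "nested P t = P @ map (\<lambda>x. t *\<^sub>R x) P"

end

theory Submission
  imports Defs
begin

lemma pt_nth[simp]: "pt a b c $ 1 = a" "pt a b c $ 2 = b" "pt a b c $ 3 = c"
  by (simp_all add: pt_def)
lemma pt_inner[simp]: "inner (pt a b c) (pt d e f) = a*d+b*e+c*f"
  by (simp add: inner_vec_def sum_3)
lemma pt_eq[simp]: "pt a b c = pt d e f \<longleftrightarrow> a = d \<and> b = e \<and> c = f"
  by (auto simp add: vec_eq_iff forall_3)
lemma pt_scale: "t *\<^sub>R pt a b c = pt (t*a) (t*b) (t*c)"
  by (simp add: vec_eq_iff forall_3)
definition icub :: "real \<Rightarrow> real" where "icub s = 1 / sqrt s ^ 3"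

lemma L1[simp]: "1 / norm (x - t *\<^sub>R y) ^ 3 = icub (t*t*inner y y - 2*t*inner x y + inner x x)"
  by (simp add: icub_def norm_eq_sqrt_inner inner_diff_left inner_diff_right inner_commute algebra_simps)
lemma L2[simp]: "1 / norm (t *\<^sub>R y - x) ^ 3 = icub (t*t*inner y y - 2*t*inner x y + inner x x)"
  by (metis L1 norm_minus_commute)
lemma L4[simp]: "1 / norm (pt a b c - pt d e f) ^ 3 = icub ((a-d)*(a-d)+(b-e)*(b-e)+(c-f)*(c-f))"
proof -
  have "pt a b c - pt d e f = pt (a-d) (b-e) (c-f)" by (simp add: vec_eq_iff forall_3)
  then show ?thesis by (simp add: icub_def norm_eq_sqrt_inner)
qed
lemma pt_diff_in: "inner (pt a b c - pt d e f) (pt a b c - pt d e f) = (a-d)*(a-d)+(b-e)*(b-e)+(c-f)*(c-f)"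
  proof -
  have "pt a b c - pt d e f = pt (a-d) (b-e) (c-f)" by (simp add: vec_eq_iff forall_3)
  then show ?thesis by simp
qed
lemma icub_sq[simp]: "0 < t \<Longrightarrow> icub (a * (t * t)) = icub a / t^3"
  by (simp add: icub_def real_sqrt_mult power_mult_distrib)
lemma sum8: "sum f {..<8::nat} = f 0 + f 1 + f 2 + f 3 + f 4 + f 5 + f 6 + f 7"
  by (simp add: numeral_eq_Suc)
lemma sum12: "sum f {..<12::nat} = f 0 + f 1 + f 2 + f 3 + f 4 + f 5 + f 6 + f 7 + f 8 + f 9 + f 10 + f 11"
  by (simp add: numeral_eq_Suc)
lemma sum16: "sum f {..<16::nat} = f 0 + f 1 + f 2 + f 3 + f 4 + f 5 + f 6 + f 7 + f 8 + f 9 + f 10 + f 11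
   + f 12 + f 13 + f 14 + f 15"
  by (simp add: numeral_eq_Suc)

lemma inner3: "inner (v::real^3) w = v$1*w$1 + v$2*w$2 + v$3*w$3"
  by (simp add: inner_vec_def sum_3)
lemma all8: "(\<forall>i<8::nat. P i) = (P 0 \<and> P 1 \<and> P 2 \<and> P 3 \<and> P 4 \<and> P 5 \<and> P 6 \<and> P 7)"
  by (simp add: numeral_eq_Suc All_less_Suc conj_ac)
lemma all12: "(\<forall>i<12::nat. P i) = (P 0 \<and> P 1 \<and> P 2 \<and> P 3 \<and> P 4 \<and> P 5 \<and> P 6 \<and> P 7 \<and> P 8 \<and> P 9 \<and> P 10 \<and> P 11)"
  by (simp add: numeral_eq_Suc All_less_Suc conj_ac)
lemma all16: "(\<forall>i<16::nat. P i) = (P 0 \<and> P 1 \<and> P 2 \<and> P 3 \<and> P 4 \<and> P 5 \<and> P 6 \<and> P 7 \<and> P 8 \<and> P 9 \<and> P 10 \<and> P 11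
   \<and> P 12 \<and> P 13 \<and> P 14 \<and> P 15)"
  by (simp add: numeral_eq_Suc All_less_Suc conj_ac)
definition E :: "(real^3) list \<Rightarrow> real list \<Rightarrow> real \<Rightarrow> nat \<Rightarrow> real^3" where
 "E q m c i = (\<Sum>j<length q. (m!j * (1/norm(q!j - q!i)^3 - c)) *\<^sub>R (q!j - q!i))"

lemma cc_iff: "central_configuration q m \<longleftrightarrow> length m = length q \<and> distinct q \<and>
   (\<exists>c. \<forall>i<length q. E q m c i = 0)"
proof -
  have "(\<Sum>j\<in>{..<length q} - {i}. (m!j * (1/norm(q!j - q!i)^3 - c)) *\<^sub>R (q!j - q!i)) = E q m c i"
    if "i < length q" for i c
    using that by (simp add: E_def sum_diff1)
  then show ?thesis unfolding central_configuration_def by auto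
qed

definition sp :: "real \<Rightarrow> real \<Rightarrow> real \<Rightarrow> 3 \<Rightarrow> 3 \<Rightarrow> 3 \<Rightarrow> real^3 \<Rightarrow> real^3" where
  "sp s1 s2 s3 p1 p2 p3 v = pt (s1 * v$p1) (s2 * v$p2) (s3 * v$p3)"

lemma sp_linear: "linear (sp s1 s2 s3 p1 p2 p3)"
  by (rule linearI) (simp_all add: sp_def vec_eq_iff forall_3 algebra_simps)

lemma sp_norm:
  assumes "s1 * s1 = 1" "s2 * s2 = 1" "s3 * s3 = 1" "distinct [p1,p2,p3]"
  shows "norm (sp s1 s2 s3 p1 p2 p3 v) = norm v"
proof -
  have "s1* v$p1*(s1* v$p1) + s2* v$p2*(s2* v$p2) + s3* v$p3*(s3* v$p3) = (s1 * s1)*(v$p1* v$p1) + (s2 * s2)*(v$p2* v$p2) + (s3 * s3)*(v$p3* v$p3)"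
    by algebra
  also have "\<dots> = v$p1* v$p1 + v$p2* v$p2 + v$p3* v$p3"
    using assms(1-3) by simp
  also have "\<dots> = v$1* v$1 + v$2* v$2 + v$3* v$3"
    using exhaust_3[of p1] exhaust_3[of p2] exhaust_3[of p3] assms(4) by auto
  finally show ?thesis by (simp add: sp_def norm_eq_sqrt_inner inner3)
qed

lemma sp_pt[simp]: "sp s1 s2 s3 p1 p2 p3 (pt a b c) = pt (s1 * pt a b c $ p1) (s2 * pt a b c $ p2) (s3 * pt a b c $ p3)"
  by (simp add: sp_def)
lemma sp_scale[simp]: "sp s1 s2 s3 p1 p2 p3 (t *\<^sub>R v) = t *\<^sub>R sp s1 s2 s3 p1 p2 p3 v"
  by (simp add: linear_scale[OF sp_linear])

lemma bij_list:
  assumes "distinct l" "length l = N" "\<forall>x\<in>set l. x < N"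
  shows "bij_betw (\<lambda>j. l!j) {..<N} {..<N}"
proof -
  have "set l \<subseteq> {..<N}" using assms(3) by auto
  moreover have "card (set l) = card {..<N}" using assms(1,2) by (simp add: distinct_card)
  ultimately have "set l = {..<N}" by (simp add: card_subset_eq)
  then show ?thesis using bij_betw_nth[OF assms(1)] assms(2) by simp
qed

lemma E_sym:
  assumes bij: "bij_betw \<sigma> {..<length q} {..<length q}"
    and qs: "\<And>j. j < length q \<Longrightarrow> q!(\<sigma> j) = g (q!j)"
    and ms: "\<And>j. j < length q \<Longrightarrow> m!(\<sigma> j) = m!j"
    and lin: "linear g" and iso: "\<And>v. norm (g v) = norm v"
    and i: "i < length q"
  shows "E q m c (\<sigma> i) = g (E q m c i)"
proof -
  let ?F = "\<lambda>j. (m!j * (1/norm(q!j - q!(\<sigma> i))^3 - c)) *\<^sub>R (q!j - q!(\<sigma> i))"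
  have "E q m c (\<sigma> i) = sum ?F {..<length q}" by (simp add: E_def)
  also have "\<dots> = sum (\<lambda>j. ?F (\<sigma> j)) {..<length q}"
    using sum.reindex_bij_betw[OF bij, of ?F] by simp
  also have "\<dots> = (\<Sum>j<length q. g ((m!j * (1/norm(q!j - q!i)^3 - c)) *\<^sub>R (q!j - q!i)))"
  proof (rule sum.cong[OF refl])
    fix j assume j: "j \<in> {..<length q}"
    have d: "q!(\<sigma> j) - q!(\<sigma> i) = g (q!j - q!i)" using qs j i lin by (simp add: linear_diff)
    show "?F (\<sigma> j) = g ((m!j * (1/norm(q!j - q!i)^3 - c)) *\<^sub>R (q!j - q!i))"
      unfolding d using ms j iso lin by (simp add: linear_scale)
  qed
  also have "\<dots> = g (E q m c i)" by (simp add: E_def linear_sum[OF lin])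
  finally show ?thesis .
qed

definition Kc :: "(real^3) list \<Rightarrow> real \<Rightarrow> real \<Rightarrow> nat \<Rightarrow> real" where
  "Kc q c t j = (\<Sum>i<length q. (if 2*i < length q then t^2 else -1) *
       ((1/norm(q!j - q!i)^3 - c) * inner (q!j - q!i) (q!i)))"

lemma Kc_sum:
  "(\<Sum>i<length q. (if 2*i < length q then t^2 else -1) * inner (E q m c i) (q!i))
   = (\<Sum>j<length q. m!j * Kc q c t j)"
proof -
  have "(\<Sum>i<length q. (if 2*i < length q then t^2 else -1) * inner (E q m c i) (q!i))
    = (\<Sum>i<length q. \<Sum>j<length q. m!j * ((if 2*i < length q then t^2 else -1) *
       ((1/norm(q!j - q!i)^3 - c) * inner (q!j - q!i) (q!i))))"
    by (simp add: E_def inner_sum_left sum_distrib_left algebra_simps)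
  also have "\<dots> = (\<Sum>j<length q. m!j * Kc q c t j)"
    by (subst sum.swap) (simp add: Kc_def sum_distrib_left)
  finally show ?thesis .
qed


lemma sym_zero:
  assumes "distinct l" "length l = length q" "\<forall>x\<in>set l. x < length q"
    "\<forall>j<length q. q!(l!j) = sp sa sb sc pa pb pc (q!j)" "\<forall>j<length q. m!(l!j) = m!j"
    "sa * sa = 1" "sb * sb = 1" "sc * sc = 1" "distinct [pa,pb,pc]" "i < length q" "E q m c i = 0"
  shows "E q m c (l!i) = 0"
proof -
  have "E q m c (l!i) = sp sa sb sc pa pb pc (E q m c i)"
    by (rule E_sym[where \<sigma>="\<lambda>j. l!j"]) 
       (use assms bij_list[OF assms(1,2,3)] sp_linear sp_norm in auto)
  then show ?thesis using assms(11) linear_0[OF sp_linear] by simp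
qed

lemma generic:
  fixes P :: "(real^3) list" and A K t0 t1 :: real and B C :: "real \<Rightarrow> real"
  assumes K: "K > 0"
  and ex: "\<And>t \<mu> c. 0<t \<Longrightarrow> t<1 \<Longrightarrow> 0<\<mu> \<Longrightarrow> K*c*(1+\<mu>) = A + \<mu>*B t \<Longrightarrow>
        K*c*t^2*(1+\<mu>) = C t + \<mu>*A/t \<Longrightarrow>
        \<exists>m. length m = 2*length P \<and> (\<forall>x\<in>set m. 0<x) \<and> central_configuration (nested P t) m"
  and nex: "\<And>t m. 0<t \<Longrightarrow> t<1 \<Longrightarrow> length m = 2*length P \<Longrightarrow> (\<forall>x\<in>set m. 0<x) \<Longrightarrow>
        central_configuration (nested P t) m \<Longrightarrow>
        \<exists>Mo Mi. 0<Mo \<and> 0<Mi \<and> Mo*(C t - t^2*A) + Mi*(A/t - t^2*B t) = 0"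
  and g1: "\<And>t. 0<t \<Longrightarrow> t<1 \<Longrightarrow> C t < t^2*A"
  and mono: "\<And>s t. 0<s \<Longrightarrow> s<t \<Longrightarrow> t<1 \<Longrightarrow> s^3*B s < t^3*B t"
  and t01: "0<t0" "t0<t1" "t1<1" and h0: "t0^3*B t0 < A" and h1: "A < t1^3 * B t1"
  and cont: "continuous_on {t0..t1} (\<lambda>t. t^3*B t)"
  shows "\<exists>\<delta>::real. 0 < \<delta> \<and> \<delta> < 1 \<and>
      (\<forall>t. 0 < t \<and> t < \<delta> \<longrightarrow>
         (\<exists>m. length m = 2 * length P \<and> (\<forall>x\<in>set m. 0 < x) \<and>
              central_configuration (nested P t) m)) \<and>
      (\<forall>t. \<delta> < t \<and> t < 1 \<longrightarrow>
         \<not> (\<exists>m. length m = 2 * length P \<and> (\<forall>x\<in>set m. 0 < x) \<and>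
              central_configuration (nested P t) m))"
proof -
  obtain d where d: "t0 \<le> d" "d \<le> t1" "d^3 * B d = A"
    using IVT'[of "\<lambda>t. t^3*B t" t0 A t1] h0 h1 t01 cont by force
  have d0: "0 < d" "d < 1" using d t01 by auto
  show ?thesis
  proof (rule exI[of _ d], intro conjI allI impI)
    show "0 < d" "d < 1" by fact+
  next
    fix t assume tt: "0 < t \<and> t < d"
    then have t: "0 < t" "t < 1" using d0 by auto
    have hpos: "t^3 * B t < A" using mono[of t d] tt d0 d(3) by auto
    define h where "h = A - t^3 * B t"
    have hp: "h > 0" using hpos h_def by simp
    define \<mu> where "\<mu> = t * (t^2*A - C t) / h"
    have mu: "\<mu> > 0" unfolding \<mu>_def using g1[OF t] t hp by simp
    define c where "c = (A + \<mu> * B t) / (K * (1 + \<mu>))"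
    have nz: "K * (1 + \<mu>) \<noteq> 0" using K mu by simp
    have "c * (K * (1 + \<mu>)) = A + \<mu>*B t" unfolding c_def using nz by simp
    moreover have "K*c*(1+\<mu>) = c * (K * (1 + \<mu>))" by (simp add: ac_simps)
    ultimately have e1: "K*c*(1+\<mu>) = A + \<mu>*B t" by simp
    have mh: "\<mu> * h = t * (t^2*A - C t)" unfolding \<mu>_def using hp by simp
    have "K*c*t^2*(1+\<mu>) = t^2 * (A + \<mu>*B t)" using e1 by (metis mult.commute mult.left_commute)
    also have "\<dots> = C t + \<mu>*A/t"
    proof -
      have "\<mu> * (A - t^3 * B t) = t * (t^2*A - C t)" using mh h_def by simp
      then have "\<mu> * A - \<mu> * t^3 * B t = t^3 * A - t * C t" by (simp add: algebra_simps power2_eq_square power3_eq_cube)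
      then have "t * (t^2 * (A + \<mu>*B t)) = t * (C t + \<mu>*A/t)" using t
        by (simp add: algebra_simps power2_eq_square power3_eq_cube)
      then show ?thesis using t by simp
    qed
    finally have e2: "K*c*t^2*(1+\<mu>) = C t + \<mu>*A/t" .
    show "\<exists>m. length m = 2 * length P \<and> (\<forall>x\<in>set m. 0 < x) \<and> central_configuration (nested P t) m"
      using ex[OF t mu e1 e2] .
  next
    fix t assume tt: "d < t \<and> t < 1"
    then have t: "0 < t" "t < 1" using d0 by auto
    have hneg: "A < t^3 * B t" using mono[of d t] tt d0 d(3) by auto
    show "\<not> (\<exists>m. length m = 2 * length P \<and> (\<forall>x\<in>set m. 0 < x) \<and> central_configuration (nested P t) m)"
    proof
      assume "\<exists>m. length m = 2 * length P \<and> (\<forall>x\<in>set m. 0 < x) \<and> central_configuration (nested P t) m"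
      then obtain m where "length m = 2 * length P" "\<forall>x\<in>set m. 0 < x" "central_configuration (nested P t) m" by blast
      from nex[OF t this] obtain Mo Mi where M: "0<Mo" "0<Mi" "Mo*(C t - t^2*A) + Mi*(A/t - t^2*B t) = 0" by blast
      have "Mo*(C t - t^2*A) < 0" using M g1[OF t] by (simp add: mult_pos_neg)
      moreover have "A/t - t^2*B t < 0"
      proof -
        have "A/t - t^2*B t = (A - t^3 * B t)/t" using t by (simp add: field_simps power2_eq_square power3_eq_cube)
        then show ?thesis using hneg t by (simp add: divide_neg_pos)
      qed
      then have "Mi*(A/t - t^2*B t) < 0" using M by (simp add: mult_pos_neg)
      ultimately show False using M(3) by linarith
    qed
  qed
qed

lemma icub_alt: "0 < s \<Longrightarrow> icub s = 1 / (s * sqrt s)"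
  unfolding icub_def by (simp add: power3_eq_cube)

lemma icub_pos: "0 < s \<Longrightarrow> 0 < icub s"
  by (simp add: icub_alt)

lemma icub_le1: assumes s: "1 \<le> s" shows "icub s \<le> 1"
proof -
  have "1 \<le> sqrt s" using s by simp
  then have "1 * 1 \<le> s * sqrt s" using s by (intro mult_mono) auto
  then show ?thesis using s by (simp add: icub_alt)
qed

lemma sqrt_le_am: fixes a s :: real assumes "0 < a" "0 \<le> s" shows "2 * a * sqrt s \<le> s + a^2"
proof -
  have "0 \<le> (sqrt s - a)^2" by simp
  then show ?thesis using assms by (simp add: power2_eq_square algebra_simps)
qed

lemma icub_up: fixes a s :: real assumes s: "0 < s" and a: "0 < a" shows "icub s \<le> (s + a^2) / (2 * a * s^2)"
proof -
  have ss: "0 < sqrt s" using s by simp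
  have "2 * a * sqrt s \<le> s + a^2" using sqrt_le_am s a by simp
  then have "(2 * a * sqrt s) * sqrt s \<le> (s + a^2) * sqrt s" using ss by (intro mult_right_mono) auto
  then have h: "2 * a * s \<le> (s + a^2) * sqrt s" using s by (simp add: mult.assoc)
  then have "s * (2 * a * s) \<le> s * ((s + a^2) * sqrt s)" using s by (intro mult_left_mono) auto
  then have h2: "2 * a * s^2 \<le> (s + a^2) * (s * sqrt s)" by (simp add: power2_eq_square algebra_simps)
  have p1: "0 < s * sqrt s" using s ss by simp
  have p2: "0 < 2 * a * s^2" using s a by simp
  show ?thesis unfolding icub_alt[OF s] using h2 p1 p2 by (simp add: divide_simps)
qed

lemma icub_low: fixes a s :: real assumes s: "0 < s" and a: "0 < a" shows "2 * a / (s * (s + a^2)) \<le> icub s"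
proof -
  have ss: "0 < sqrt s" using s by simp
  have h0: "2 * a * sqrt s \<le> s + a^2" using sqrt_le_am s a by simp
  then have "s * (2 * a * sqrt s) \<le> s * (s + a^2)" using s by (intro mult_left_mono) auto
  then have h2: "2 * a * (s * sqrt s) \<le> s * (s + a^2)" by (simp add: algebra_simps)
  have p1: "0 < s * sqrt s" using s ss by simp
  have p2: "0 < s * (s + a^2)" using s a by (intro mult_pos_pos add_pos_pos) auto
  show ?thesis unfolding icub_alt[OF s] using h0 h2 p1 p2 s a by (simp add: divide_simps add_pos_pos not_less[symmetric])
qed

lemma t3icub: fixes t w :: real assumes "0 < t" "0 < w" shows "t^3 * icub w = (t^2/w) * sqrt (t^2/w)"
proof -
  have "sqrt (t^2/w) = t / sqrt w" using assms by (simp add: real_sqrt_divide)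
  then show ?thesis using assms by (simp add: icub_alt field_simps power2_eq_square power3_eq_cube)
qed

lemma xsqrt_mono: fixes a b :: real shows "0 < a \<Longrightarrow> a < b \<Longrightarrow> a * sqrt a < b * sqrt b"
  by (simp add: mult_strict_mono)

lemma frac_mono:
  fixes s t r k :: real
  assumes s: "0 < s" and st: "s < t" and t1: "t < 1" and r: "0 < r" and k: "k \<le> r"
  shows "s^2/(r* s* s - 2*k* s + r) < t^2/(r*t*t - 2*k*t + r)"
proof -
  have ws: "0 < r* s* s - 2*k* s + r"
  proof -
    have "2*k* s \<le> 2*r* s" using k s by simp
    moreover have "r* s* s - 2*r* s + r = r*(1-s)^2" by (simp add: power2_eq_square algebra_simps)
    moreover have "0 < r*(1-s)^2" using r st t1 by simp
    ultimately show ?thesis by linarith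
  qed
  have wt: "0 < r*t*t - 2*k*t + r"
  proof -
    have "2*k*t \<le> 2*r*t" using k s st by simp
    moreover have "r*t*t - 2*r*t + r = r*(1-t)^2" by (simp add: power2_eq_square algebra_simps)
    moreover have "0 < r*(1-t)^2" using r t1 by simp
    ultimately show ?thesis by linarith
  qed
  have key: "2*k* s*t < r*(t+s)"
  proof -
    have "s*t < s" using s st t1 by simp
    moreover have "s*t < t" using s st t1 by simp
    ultimately have "2*(s*t) < t + s" by linarith
    then have "r*(2*(s*t)) < r*(t+s)" using r by simp
    moreover have "(2*(s*t))*k \<le> (2*(s*t))*r" using k s st by (intro mult_left_mono) auto
    ultimately show ?thesis by (simp add: algebra_simps)
  qed
  have "s^2*(r*t*t - 2*k*t + r) < t^2*(r* s* s - 2*k* s + r)"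
  proof -
    have "t^2*(r* s* s - 2*k* s + r) - s^2*(r*t*t - 2*k*t + r) = (t - s)*(r*(t+s) - 2*k* s*t)"
      by (simp add: power2_eq_square algebra_simps)
    moreover have "0 < (t - s)*(r*(t+s) - 2*k* s*t)" using st key by simp
    ultimately show ?thesis by linarith
  qed
  then show ?thesis using ws wt by (simp add: divide_simps)
qed

lemma icub_cont:
  assumes "continuous_on S f" "\<And>x. x\<in>S \<Longrightarrow> 0 < f x"
  shows "continuous_on S (\<lambda>x. icub (f x))"
proof -
  have nz: "\<And>x. x\<in>S \<Longrightarrow> f x \<noteq> 0" using assms(2) by (metis less_irrefl)
  show ?thesis unfolding icub_def using assms(1) by (intro continuous_intros) (auto simp: nz)
qed

lemma sqrt3_bounds: "1 < sqrt 3" "sqrt 3 < 2" "sqrt 3 * sqrt 3 = 3" "sqrt 3 ^ 2 = 3"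
  by (simp_all add: real_less_rsqrt real_sqrt_less_iff real_less_lsqrt)

definition "tetM (\<mu>::real) = [1,1,1,1,\<mu>,\<mu>,\<mu>,\<mu>]"
definition "At = 12 * icub 8"
definition "Bt t = 3*(1-t)*icub(t*t*3 - 6*t + 3) + 3*(3+t)*icub(t*t*3 + 2*t + 3)"
definition "Ct t = t*(3*t-3)*icub(t*t*3 - 6*t+3) + 3*t*(3*t+1)*icub(t*t*3+2*t+3)"

lemma tet_E0:
  assumes t: "0 < t" shows "\<forall>x. E (nested tetrahedron t) (tetM \<mu>) c 0 $ x * 3 = pt 1 1 1 $ x * (12*c*(1+\<mu>) - At - \<mu> * Bt t)"
  unfolding forall_3
  apply (intro conjI)
  apply (simp_all add: E_def nested_def tetrahedron_def tetM_def At_def Bt_def sum8 pt_diff_in inner3 sum_component t)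
  apply algebra+
  done

lemma tet_En:
  assumes t: "0 < t" shows "\<forall>x. E (nested tetrahedron t) (tetM \<mu>) c 4 $ x * (3 * t) = pt 1 1 1 $ x * (12*c*t^2*(1+\<mu>) - Ct t - \<mu> * At / t)"
  unfolding forall_3
  apply (intro conjI)
  apply (simp_all add: E_def nested_def tetrahedron_def tetM_def At_def Ct_def sum8 pt_diff_in inner3 sum_component t)
  apply (simp_all add: field_simps t power3_eq_cube less_imp_neq[OF t, symmetric])
  apply algebra+
  done

lemma tet_ex:
  assumes t: "0 < t" and t1: "t < 1" and mu: "0 < \<mu>"
    and eq1: "12*c*(1+\<mu>) = At + \<mu>*Bt t" and eq2: "12*c*t^2*(1+\<mu>) = Ct t + \<mu>*At/t"
  shows "\<exists>m. length m = 2*length tetrahedron \<and> (\<forall>x\<in>set m. 0<x) \<and> central_configuration (nested tetrahedron t) m"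
proof (intro exI conjI)
  let ?Q = "nested tetrahedron t" and ?M = "tetM \<mu>"
  have lq: "length ?Q = 8" by (simp add: nested_def tetrahedron_def)
  have E0: "E ?Q ?M c 0 = 0"
  proof -
    have z: "12*c*(1+\<mu>) - At - \<mu> * Bt t = 0" using eq1 by simp
    have "E ?Q ?M c 0 $ x * 3 = 0" for x using spec[OF tet_E0[OF t, of \<mu> c], of x] unfolding z by simp
    then show ?thesis by (simp add: vec_eq_iff)
  qed
  have En: "E ?Q ?M c 4 = 0"
  proof -
    have z: "12*c*t^2*(1+\<mu>) - Ct t - \<mu> * At / t = 0" using eq2 by simp
    have "E ?Q ?M c 4 $ x * (3 * t) = 0" for x using spec[OF tet_En[OF t, of \<mu> c], of x] unfolding z by simp
    then show ?thesis using t by (simp add: vec_eq_iff)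
  qed
  have ms: "\<forall>j<length ?Q. ?M!(l!j) = ?M!j" if "l \<in> {[1, 0, 3, 2, 5, 4, 7, 6], [2, 3, 0, 1, 6, 7, 4, 5], [3, 2, 1, 0, 7, 6, 5, 4]}" for l
    using that unfolding lq all8 by (auto simp: tetM_def)
  have S0: "E ?Q ?M c ([1, 0, 3, 2, 5, 4, 7, 6]!i) = 0" if "i \<in> {0,4}" for i
    apply (rule sym_zero[where sa="-1" and sb="-1" and sc="1" and pa=1 and pb=2 and pc=3])
    apply (simp; fail)
    apply (simp add: lq; fail)
    apply (simp add: lq; fail)
    apply (unfold lq all8, simp add: nested_def tetrahedron_def; fail)
    apply (rule ms, simp)
    apply (simp_all add: lq)
    using that E0 En by auto
  have S1: "E ?Q ?M c ([2, 3, 0, 1, 6, 7, 4, 5]!i) = 0" if "i \<in> {0,4}" for i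
    apply (rule sym_zero[where sa="-1" and sb="1" and sc="-1" and pa=1 and pb=2 and pc=3])
    apply (simp; fail)
    apply (simp add: lq; fail)
    apply (simp add: lq; fail)
    apply (unfold lq all8, simp add: nested_def tetrahedron_def; fail)
    apply (rule ms, simp)
    apply (simp_all add: lq)
    using that E0 En by auto
  have S2: "E ?Q ?M c ([3, 2, 1, 0, 7, 6, 5, 4]!i) = 0" if "i \<in> {0,4}" for i
    apply (rule sym_zero[where sa="1" and sb="-1" and sc="-1" and pa=1 and pb=2 and pc=3])
    apply (simp; fail)
    apply (simp add: lq; fail)
    apply (simp add: lq; fail)
    apply (unfold lq all8, simp add: nested_def tetrahedron_def; fail)
    apply (rule ms, simp)
    apply (simp_all add: lq)
    using that E0 En by auto
  have "\<forall>i<8. E ?Q ?M c i = 0"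
    unfolding all8 using E0 En S0[of 0] S0[of 4] S1[of 0] S1[of 4] S2[of 0] S2[of 4] by simp
  moreover have "distinct ?Q" using t t1 by (simp add: nested_def tetrahedron_def pt_scale)
  ultimately show "central_configuration ?Q ?M" unfolding cc_iff lq by (auto simp: tetM_def nested_def tetrahedron_def)
  show "length ?M = 2 * length tetrahedron" by (simp add: tetM_def tetrahedron_def)
  show "\<forall>x\<in>set ?M. 0 < x" using mu by (simp add: tetM_def)
qed

lemma tet_Kc:
  assumes t: "0 < t" shows "\<forall>j<8. Kc (nested tetrahedron t) c t j = (if j < 4 then Ct t - t^2*At else At/t - t^2*Bt t)"
  unfolding all8
  apply (intro conjI)
  apply (simp_all add: Kc_def nested_def tetrahedron_def At_def Bt_def Ct_def sum8 pt_diff_in inner3 t)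
  apply (simp_all add: field_simps t power3_eq_cube power2_eq_square less_imp_neq[OF t, symmetric])
  done

lemma tet_nex:
  assumes t: "0 < t" and t1: "t < 1" and lm: "length m = 2*length tetrahedron" and pos: "\<forall>x\<in>set m. 0<x"
    and cc: "central_configuration (nested tetrahedron t) m"
  shows "\<exists>Mo Mi. 0<Mo \<and> 0<Mi \<and> Mo*(Ct t - t^2*At) + Mi*(At/t - t^2*Bt t) = 0"
proof -
  let ?Q = "nested tetrahedron t"
  have lq: "length ?Q = 8" by (simp add: nested_def tetrahedron_def)
  have lmN: "length m = 8" using lm by (simp add: tetrahedron_def)
  obtain c where c: "\<forall>i<8. E ?Q m c i = 0" using cc unfolding cc_iff lq by blast
  have "0 = (\<Sum>i<length ?Q. (if 2*i < length ?Q then t^2 else -1) * inner (E ?Q m c i) (?Q!i))"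
    using c unfolding lq by simp
  also have "\<dots> = (\<Sum>j<length ?Q. m!j * Kc ?Q c t j)" by (rule Kc_sum)
  also have "\<dots> = (\<Sum>j<8. m!j * (if j < 4 then Ct t - t^2*At else At/t - t^2*Bt t))"
    using tet_Kc[OF t, of c] unfolding lq by (intro sum.cong) auto
  also have "\<dots> = (m!0+m!1+m!2+m!3)*(Ct t - t^2*At) + (m!4+m!5+m!6+m!7)*(At/t - t^2*Bt t)"
    unfolding sum8 by (simp add: algebra_simps)
  finally have eq: "(m!0+m!1+m!2+m!3)*(Ct t - t^2*At) + (m!4+m!5+m!6+m!7)*(At/t - t^2*Bt t) = 0" by simp
  have mp: "0 < m!j" if "j < 8" for j using pos nth_mem[of j m] that lmN by auto
  show ?thesis
    by (rule exI[of _ "m!0+m!1+m!2+m!3"], rule exI[of _ "m!4+m!5+m!6+m!7"])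
       (use eq mp[of 0] mp[of 1] mp[of 2] mp[of 3] mp[of 4] mp[of 5] mp[of 6] mp[of 7] in auto)
qed


lemma tet_self: assumes "t < 1" shows "icub (t*t*3 - 6*t + 3) = 1/(3 * sqrt 3*(1-t)^3)"
proof -
  have "t*t*3 - 6*t + 3 = 3*(1-t)^2" by (simp add: power2_eq_square algebra_simps)
  then have "icub (t*t*3 - 6*t + 3) = 1 / sqrt (3*(1-t)^2) ^ 3" unfolding icub_def by simp
  also have "sqrt (3*(1-t)^2) = sqrt 3 * (1-t)" using assms by (simp add: real_sqrt_mult)
  also have "(sqrt 3 * (1-t))^3 = sqrt 3 ^ 3 * (1-t)^3"
    by (simp only: power_mult_distrib)
  also have "sqrt 3 ^ 3 = 3 * sqrt 3" by (simp add: power3_eq_cube)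
  finally show ?thesis .
qed

lemma tet_A: "9/(10* sqrt 3) \<le> At" "At \<le> 3/2"
proof -
  have b: "sqrt 72 = 3 * sqrt 8" using real_sqrt_mult[of 9 8] by simp
  have c: "sqrt 75 = 5 * sqrt 3" using real_sqrt_mult[of 25 3] by simp
  have "sqrt 72 \<le> sqrt 75" by simp
  then have d: "3 * sqrt 8 \<le> 5 * sqrt 3" using b c by simp
  have At: "At = 12 / (8 * sqrt 8)" unfolding At_def by (simp add: icub_alt)
  show "9/(10* sqrt 3) \<le> At" unfolding At using d by (simp add: divide_simps)
  have "1 \<le> sqrt 8" by simp
  then show "At \<le> 3/2" unfolding At by (simp add: divide_simps)
qed

lemma tet_poly: fixes t :: real assumes t: "0 < t" and t1: "t < 1"
  shows "3*(3*t+1)*((t*t*3 + 2*t + 3)+3)/(2*(t*t*3 + 2*t + 3)^2) < 9*t/10 + 1/(1-t)^2"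
proof -
  define w where "w = t*t*3 + 2*t + 3"
  have w0: "0 < w" unfolding w_def using t by (simp add: add_pos_pos)
  define Q where "Q = (81/5)*t^0*(1-t)^6 + (1027/5)*t^1*(1-t)^5 + (3938/5)*t^2*(1-t)^4 + (7147/5)*t^3*(1-t)^3 + (6796/5)*t^4*(1-t)^2 + (640/1)*t^5*(1-t)^1 + (128/1)*t^6*(1-t)^0"
  have Q0: "0 < Q" unfolding Q_def using t t1
    by (intro add_pos_nonneg mult_pos_pos mult_nonneg_nonneg zero_less_power zero_le_power) auto
  have id: "(9*t*(1-t)^2+10)*(2*w^2) - 3*(3*t+1)*(w+3)*(10*(1-t)^2) = 10*t*Q"
    unfolding Q_def w_def by algebra
  have "3*(3*t+1)*(w+3)*(10*(1-t)^2) < (9*t*(1-t)^2+10)*(2*w^2)"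
    using id Q0 t by (smt (verit) mult_pos_pos)
  then show ?thesis unfolding w_def[symmetric] using w0 t1 by (simp add: divide_simps) (simp add: mult.commute)
qed

lemma tet_g1: assumes t: "0 < t" and t1: "t < 1" shows "Ct t < t^2 * At"
proof -
  define r where "r = sqrt 3"
  have r0: "0 < r" "r^2 = 3" unfolding r_def using sqrt3_bounds by auto
  define w where "w = t*t*3 + 2*t + 3"
  have w0: "0 < w" unfolding w_def using t by (simp add: add_pos_pos)
  define u where "u = 1 - t"
  have u0: "0 < u" using t1 u_def by simp
  define X where "X = icub w"
  have Cf0: "Ct t = t*(3*t-3)*(1/(3*r*u^3)) + 3*t*(3*t+1)*X"
    unfolding Ct_def tet_self[OF t1] X_def w_def r_def u_def by simp
  have "3*t-3 = -3*u" unfolding u_def by simp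
  then have "t*(3*t-3)*(1/(3*r*u^3)) = t*(-3*u)*(1/(3*r*u^3))" by simp
  also have "\<dots> = -(t/r) * (1/u^2)"
    using u0 r0 by (simp add: field_simps power3_eq_cube power2_eq_square)
  finally have Cf: "Ct t = -(t/r) * (1/u^2) + 3*t*(3*t+1)*X" using Cf0 by simp
  have Xu: "X \<le> (w+3)/(2*r*w^2)" unfolding X_def using icub_up[OF w0 r0(1)] r0(2) by simp
  have "3*t*(3*t+1)*X \<le> 3*t*(3*t+1)*((w+3)/(2*r*w^2))"
    using Xu t by (intro mult_left_mono) auto
  also have "\<dots> = (t/r) * (3*(3*t+1)*(w+3)/(2*w^2))" using r0 w0 by (simp add: field_simps)
  finally have "Ct t \<le> (t/r) * (3*(3*t+1)*(w+3)/(2*w^2) - 1/u^2)" using Cf by (simp add: right_diff_distrib)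
  also have "\<dots> < (t/r) * (9*t/10)"
  proof (rule mult_strict_left_mono)
    show "3*(3*t+1)*(w+3)/(2*w^2) - 1/u^2 < 9*t/10"
      using tet_poly[OF t t1] unfolding w_def[symmetric] u_def[symmetric] by linarith
    show "0 < t/r" using t r0 by simp
  qed
  also have "\<dots> = t^2 * (9/(10*r))" by (simp add: power2_eq_square)
  also have "\<dots> \<le> t^2 * At" using tet_A(1) unfolding r_def by (intro mult_left_mono) auto
  finally show ?thesis .
qed

lemma tet_Bform: assumes t: "0 < t" and t1: "t < 1"
  shows "t^3 * Bt t = t^3/(sqrt 3*(1-t)^2) + 3*(3+t)*(t^3 * icub(t*t*3+2*t+3))"
proof -
  define u where "u = 1 - t"
  have u0: "u \<noteq> 0" using t1 u_def by simp
  have e: "t^3 * (3*u*(1/(3 * sqrt 3*u^3))) = t^3/(sqrt 3*u^2)"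
    using u0 by (simp add: field_simps power3_eq_cube power2_eq_square)
  define Y where "Y = icub(t*t*3+2*t+3)"
  have "t^3 * Bt t = t^3 * (3*u*(1/(3 * sqrt 3*u^3))) + 3*(3+t)*(t^3 * Y)"
    unfolding Bt_def tet_self[OF t1] Y_def[symmetric] u_def[symmetric] by (simp add: algebra_simps)
  also have "\<dots> = t^3/(sqrt 3*u^2) + 3*(3+t)*(t^3 * Y)" using e by simp
  finally show ?thesis unfolding u_def Y_def .
qed

lemma tet_mono: assumes s: "0 < s" and st: "s < t" and t1: "t < 1" shows "s^3 * Bt s < t^3 * Bt t"
proof -
  have t: "0 < t" "s < 1" using s st t1 by auto
  have ws: "0 < s* s*3+2* s+3" using s by (simp add: add_pos_pos)
  have wt: "0 < t*t*3+2*t+3" using t by (simp add: add_pos_pos)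
  have F: "s^2/(s* s*3+2* s+3) < t^2/(t*t*3+2*t+3)"
    using frac_mono[OF s st t1, of 3 "-1"] by (simp add: algebra_simps)
  have F0: "0 < s^2/(s* s*3+2* s+3)" using s ws by simp
  have G: "s^3 * icub(s* s*3+2* s+3) < t^3 * icub(t*t*3+2*t+3)"
    unfolding t3icub[OF s ws] t3icub[OF t(1) wt] using xsqrt_mono[OF F0 F] .
  have G0: "0 \<le> s^3 * icub(s* s*3+2* s+3)" using s ws icub_pos[OF ws] by simp
  have H: "3*(3+s)*(s^3 * icub(s* s*3+2* s+3)) < 3*(3+t)*(t^3 * icub(t*t*3+2*t+3))"
    using G G0 st s by (rule_tac mult_strict_mono) auto
  have I: "s^3/(sqrt 3*(1-s)^2) < t^3/(sqrt 3*(1-t)^2)"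
  proof (rule frac_less)
    show "0 \<le> s^3" using s by simp
    show "s^3 < t^3" using s st by (simp add: power_strict_mono)
    show "0 < sqrt 3*(1-t)^2" using t1 by simp
    show "sqrt 3*(1-t)^2 \<le> sqrt 3*(1-s)^2" using st t1 s by (intro mult_left_mono power_mono) auto
  qed
  show ?thesis unfolding tet_Bform[OF s t(2)] tet_Bform[OF t(1) t1] using H I by simp
qed

lemma tet_h0: "(1/10)^3 * Bt (1/10) < At"
proof -
  have B: "(1/10::real)^3 * Bt (1/10) = (1/10)^3/(sqrt 3*(1-1/10)^2) + 3*(3+1/10)*((1/10)^3 * icub((1/10)*(1/10)*3+2*(1/10)+3))"
    by (rule tet_Bform) simp_all
  have w: "icub ((1/10)*(1/10)*3+2*(1/10)+3) \<le> 1" by (rule icub_le1) simp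
  have a: "(1/10::real)^3/(sqrt 3*(1-1/10)^2) \<le> (1/10)^3/(1*(1-1/10)^2)"
    using sqrt3_bounds by (intro divide_left_mono mult_right_mono) auto
  have b: "3*(3+1/10)*((1/10::real)^3 * icub ((1/10)*(1/10)*3+2*(1/10)+3)) \<le> 3*(3+1/10)*((1/10)^3 * 1)"
    using w by (intro mult_left_mono) auto
  have c: "(1/10::real)^3/(1*(1-1/10)^2) + 3*(3+1/10)*((1/10)^3 * 1) < 9/20" by (simp add: power_divide)
  have d: "9/20 \<le> 9/(10 * sqrt 3)" using sqrt3_bounds by (simp add: divide_simps)
  show ?thesis using B a b c d tet_A(1) by linarith
qed

lemma tet_h1: "At < (9/10)^3 * Bt (9/10)"
proof -
  have B: "(9/10::real)^3 * Bt (9/10) = (9/10)^3/(sqrt 3*(1-9/10)^2) + 3*(3+9/10)*((9/10)^3 * icub((9/10)*(9/10)*3+2*(9/10)+3))"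
    by (rule tet_Bform) simp_all
  have w: "0 \<le> 3*(3+9/10)*((9/10::real)^3 * icub((9/10)*(9/10)*3+2*(9/10)+3))"
    using icub_pos[of "(9/10)*(9/10)*3+2*(9/10)+3"] by simp
  have a: "(9/10::real)^3/(2*(1-9/10)^2) \<le> (9/10)^3/(sqrt 3*(1-9/10)^2)"
    using sqrt3_bounds by (intro divide_left_mono mult_right_mono) auto
  have c: "3/2 < (9/10::real)^3/(2*(1-9/10)^2)" by (simp add: power_divide)
  show ?thesis using B w a c tet_A(2) by linarith
qed

lemma tet_cont: "continuous_on {1/10..9/10} (\<lambda>t. t^3 * Bt t)"
  unfolding Bt_def
proof (intro continuous_intros icub_cont)
  fix x :: real assume x: "x \<in> {1/10..9/10}"
  have "x*x*3 - 6*x + 3 = 3*(1-x)^2" by (simp add: power2_eq_square algebra_simps)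
  then show "0 < x*x*3 - 6*x + 3" using x by simp
  show "0 < x*x*3 + 2*x + 3" using x by (simp add: add_pos_pos)
qed

definition "octM (\<mu>::real) = [1,1,1,1,1,1,\<mu>,\<mu>,\<mu>,\<mu>,\<mu>,\<mu>]"
definition "Ao = 4 * icub 2 + 2 * icub 4"
definition "Bo t = (1-t)*icub(t*t - 2*t + 1) + (1+t)*icub(t*t + 2*t + 1) + 4*icub(t*t + 1)"
definition "Co t = t*(t-1)*icub(t*t - 2*t + 1) + t*(t+1)*icub(t*t + 2*t + 1) + 4*t*t*icub(t*t + 1)"

lemma oct_E0:
  assumes t: "0 < t" shows "\<forall>x. E (nested octahedron t) (octM \<mu>) c 0 $ x * 1 = pt 1 0 0 $ x * (6*c*(1+\<mu>) - Ao - \<mu> * Bo t)"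
  unfolding forall_3
  apply (intro conjI)
  apply (simp_all add: E_def nested_def octahedron_def octM_def Ao_def Bo_def sum12 pt_diff_in inner3 sum_component t)
  apply algebra+
  done

lemma oct_En:
  assumes t: "0 < t" shows "\<forall>x. E (nested octahedron t) (octM \<mu>) c 6 $ x * (1 * t) = pt 1 0 0 $ x * (6*c*t^2*(1+\<mu>) - Co t - \<mu> * Ao / t)"
  unfolding forall_3
  apply (intro conjI)
  apply (simp_all add: E_def nested_def octahedron_def octM_def Ao_def Co_def sum12 pt_diff_in inner3 sum_component t)
  apply (simp_all add: field_simps t power3_eq_cube less_imp_neq[OF t, symmetric])
  apply algebra+
  done

lemma oct_ex:
  assumes t: "0 < t" and t1: "t < 1" and mu: "0 < \<mu>"
    and eq1: "6*c*(1+\<mu>) = Ao + \<mu>*Bo t" and eq2: "6*c*t^2*(1+\<mu>) = Co t + \<mu>*Ao/t"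
  shows "\<exists>m. length m = 2*length octahedron \<and> (\<forall>x\<in>set m. 0<x) \<and> central_configuration (nested octahedron t) m"
proof (intro exI conjI)
  let ?Q = "nested octahedron t" and ?M = "octM \<mu>"
  have lq: "length ?Q = 12" by (simp add: nested_def octahedron_def)
  have E0: "E ?Q ?M c 0 = 0"
  proof -
    have z: "6*c*(1+\<mu>) - Ao - \<mu> * Bo t = 0" using eq1 by simp
    have "E ?Q ?M c 0 $ x * 1 = 0" for x using spec[OF oct_E0[OF t, of \<mu> c], of x] unfolding z by simp
    then show ?thesis by (simp add: vec_eq_iff)
  qed
  have En: "E ?Q ?M c 6 = 0"
  proof -
    have z: "6*c*t^2*(1+\<mu>) - Co t - \<mu> * Ao / t = 0" using eq2 by simp
    have "E ?Q ?M c 6 $ x * (1 * t) = 0" for x using spec[OF oct_En[OF t, of \<mu> c], of x] unfolding z by simp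
    then show ?thesis using t by (simp add: vec_eq_iff)
  qed
  have ms: "\<forall>j<length ?Q. ?M!(l!j) = ?M!j" if "l \<in> {[1, 0, 2, 3, 4, 5, 7, 6, 8, 9, 10, 11], [2, 3, 0, 1, 4, 5, 8, 9, 6, 7, 10, 11], [3, 2, 0, 1, 4, 5, 9, 8, 6, 7, 10, 11], [4, 5, 0, 1, 2, 3, 10, 11, 6, 7, 8, 9], [5, 4, 0, 1, 2, 3, 11, 10, 6, 7, 8, 9]}" for l
    using that unfolding lq all12 by (auto simp: octM_def)
  have S0: "E ?Q ?M c ([1, 0, 2, 3, 4, 5, 7, 6, 8, 9, 10, 11]!i) = 0" if "i \<in> {0,6}" for i
    apply (rule sym_zero[where sa="-1" and sb="1" and sc="1" and pa=1 and pb=2 and pc=3])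
    apply (simp; fail)
    apply (simp add: lq; fail)
    apply (simp add: lq; fail)
    apply (unfold lq all12, simp add: nested_def octahedron_def; fail)
    apply (rule ms, simp)
    apply (simp_all add: lq)
    using that E0 En by auto
  have S1: "E ?Q ?M c ([2, 3, 0, 1, 4, 5, 8, 9, 6, 7, 10, 11]!i) = 0" if "i \<in> {0,6}" for i
    apply (rule sym_zero[where sa="1" and sb="1" and sc="1" and pa=2 and pb=1 and pc=3])
    apply (simp; fail)
    apply (simp add: lq; fail)
    apply (simp add: lq; fail)
    apply (unfold lq all12, simp add: nested_def octahedron_def; fail)
    apply (rule ms, simp)
    apply (simp_all add: lq)
    using that E0 En by auto
  have S2: "E ?Q ?M c ([3, 2, 0, 1, 4, 5, 9, 8, 6, 7, 10, 11]!i) = 0" if "i \<in> {0,6}" for i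
    apply (rule sym_zero[where sa="1" and sb="-1" and sc="1" and pa=2 and pb=1 and pc=3])
    apply (simp; fail)
    apply (simp add: lq; fail)
    apply (simp add: lq; fail)
    apply (unfold lq all12, simp add: nested_def octahedron_def; fail)
    apply (rule ms, simp)
    apply (simp_all add: lq)
    using that E0 En by auto
  have S3: "E ?Q ?M c ([4, 5, 0, 1, 2, 3, 10, 11, 6, 7, 8, 9]!i) = 0" if "i \<in> {0,6}" for i
    apply (rule sym_zero[where sa="1" and sb="1" and sc="1" and pa=2 and pb=3 and pc=1])
    apply (simp; fail)
    apply (simp add: lq; fail)
    apply (simp add: lq; fail)
    apply (unfold lq all12, simp add: nested_def octahedron_def; fail)
    apply (rule ms, simp)
    apply (simp_all add: lq)
    using that E0 En by auto
  have S4: "E ?Q ?M c ([5, 4, 0, 1, 2, 3, 11, 10, 6, 7, 8, 9]!i) = 0" if "i \<in> {0,6}" for i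
    apply (rule sym_zero[where sa="1" and sb="1" and sc="-1" and pa=2 and pb=3 and pc=1])
    apply (simp; fail)
    apply (simp add: lq; fail)
    apply (simp add: lq; fail)
    apply (unfold lq all12, simp add: nested_def octahedron_def; fail)
    apply (rule ms, simp)
    apply (simp_all add: lq)
    using that E0 En by auto
  have "\<forall>i<12. E ?Q ?M c i = 0"
    unfolding all12 using E0 En S0[of 0] S0[of 6] S1[of 0] S1[of 6] S2[of 0] S2[of 6] S3[of 0] S3[of 6] S4[of 0] S4[of 6] by simp
  moreover have "distinct ?Q" using t t1 by (simp add: nested_def octahedron_def pt_scale)
  ultimately show "central_configuration ?Q ?M" unfolding cc_iff lq by (auto simp: octM_def nested_def octahedron_def)
  show "length ?M = 2 * length octahedron" by (simp add: octM_def octahedron_def)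
  show "\<forall>x\<in>set ?M. 0 < x" using mu by (simp add: octM_def)
qed

lemma oct_Kc:
  assumes t: "0 < t" shows "\<forall>j<12. Kc (nested octahedron t) c t j = (if j < 6 then Co t - t^2*Ao else Ao/t - t^2*Bo t)"
  unfolding all12
  apply (intro conjI)
  apply (simp_all add: Kc_def nested_def octahedron_def Ao_def Bo_def Co_def sum12 pt_diff_in inner3 t)
  apply (simp_all add: field_simps t power3_eq_cube power2_eq_square less_imp_neq[OF t, symmetric])
  done

lemma oct_nex:
  assumes t: "0 < t" and t1: "t < 1" and lm: "length m = 2*length octahedron" and pos: "\<forall>x\<in>set m. 0<x"
    and cc: "central_configuration (nested octahedron t) m"
  shows "\<exists>Mo Mi. 0<Mo \<and> 0<Mi \<and> Mo*(Co t - t^2*Ao) + Mi*(Ao/t - t^2*Bo t) = 0"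
proof -
  let ?Q = "nested octahedron t"
  have lq: "length ?Q = 12" by (simp add: nested_def octahedron_def)
  have lmN: "length m = 12" using lm by (simp add: octahedron_def)
  obtain c where c: "\<forall>i<12. E ?Q m c i = 0" using cc unfolding cc_iff lq by blast
  have "0 = (\<Sum>i<length ?Q. (if 2*i < length ?Q then t^2 else -1) * inner (E ?Q m c i) (?Q!i))"
    using c unfolding lq by simp
  also have "\<dots> = (\<Sum>j<length ?Q. m!j * Kc ?Q c t j)" by (rule Kc_sum)
  also have "\<dots> = (\<Sum>j<12. m!j * (if j < 6 then Co t - t^2*Ao else Ao/t - t^2*Bo t))"
    using oct_Kc[OF t, of c] unfolding lq by (intro sum.cong) auto
  also have "\<dots> = (m!0+m!1+m!2+m!3+m!4+m!5)*(Co t - t^2*Ao) + (m!6+m!7+m!8+m!9+m!10+m!11)*(Ao/t - t^2*Bo t)"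
    unfolding sum12 by (simp add: algebra_simps)
  finally have eq: "(m!0+m!1+m!2+m!3+m!4+m!5)*(Co t - t^2*Ao) + (m!6+m!7+m!8+m!9+m!10+m!11)*(Ao/t - t^2*Bo t) = 0" by simp
  have mp: "0 < m!j" if "j < 12" for j using pos nth_mem[of j m] that lmN by auto
  show ?thesis
    by (rule exI[of _ "m!0+m!1+m!2+m!3+m!4+m!5"], rule exI[of _ "m!6+m!7+m!8+m!9+m!10+m!11"])
       (use eq mp[of 0] mp[of 1] mp[of 2] mp[of 3] mp[of 4] mp[of 5] mp[of 6] mp[of 7] mp[of 8] mp[of 9] mp[of 10] mp[of 11] in auto)
qed


lemma oct_self: assumes "t < 1" shows "icub (t * t - 2 * t + 1) = 1/(1-t)^3"
proof -
  have "t * t - 2 * t + 1 = (1-t)^2" by (simp add: power2_eq_square algebra_simps)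
  then show ?thesis unfolding icub_def using assms by simp
qed

lemma oct_anti: assumes "0 < t" shows "icub (t * t + 2 * t + 1) = 1/(1+t)^3"
proof -
  have "t * t + 2 * t + 1 = (1+t)^2" by (simp add: power2_eq_square algebra_simps)
  then show ?thesis unfolding icub_def using assms by simp
qed

lemma oct_A: "1 \<le> Ao" "Ao \<le> 6"
proof -
  have "sqrt 2 \<le> 2" by (simp add: real_sqrt_le_iff[of 2 4, simplified] real_le_lsqrt)
  then have a: "1/4 \<le> icub 2" by (simp add: icub_alt divide_simps)
  have b: "0 < icub 4" by (rule icub_pos) simp
  show "1 \<le> Ao" unfolding Ao_def using a b by simp
  have "icub 2 \<le> 1" "icub 4 \<le> 1" by (rule icub_le1, simp)+
  then show "Ao \<le> 6" unfolding Ao_def by simp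
qed

lemma oct_Cform: assumes t: "0 < t" and t1: "t < 1"
  shows "Co t = -(t/(1-t)^2) + t/(1+t)^2 + 4 * t * t * icub(t * t+1)"
proof -
  define u where "u = 1 - t"
  define v where "v = 1 + t"
  have u0: "u \<noteq> 0" "v \<noteq> 0" using t t1 u_def v_def by auto
  have "t * (-u) * (1/u^3) = -(t/u^2)" using u0 by (simp add: field_simps power3_eq_cube power2_eq_square)
  moreover have "t - 1 = -u" unfolding u_def by simp
  ultimately have e1: "t * (t-1) * (1/u^3) = -(t/u^2)" by simp
  have "t* v * (1/v^3) = t/v^2" using u0 by (simp add: field_simps power3_eq_cube power2_eq_square)
  moreover have "t + 1 = v" unfolding v_def by simp
  ultimately have e2: "t * (t+1) * (1/v^3) = t/v^2" by simp
  show ?thesis unfolding Co_def oct_self[OF t1] oct_anti[OF t] using e1 e2 unfolding u_def v_def by simp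
qed

lemma oct_g1: assumes t: "0 < t" and t1: "t < 1" shows "Co t < t^2 * Ao"
proof -
  define u where "u = 1 - t"
  define v where "v = 1 + t"
  have u0: "0 < u" "0 < v" using t t1 u_def v_def by auto
  have tt: "t * t < 1" using t t1 mult_strict_mono[of t 1 t 1] by simp
  have uv: "u* v \<le> 1" "0 < u* v" using t u0 tt unfolding u_def v_def by (auto simp: algebra_simps)
  have X: "icub(t * t+1) \<le> 1" by (rule icub_le1) simp
  have d: "u^2 - v^2 = -4 * t" unfolding u_def v_def by (simp add: power2_eq_square algebra_simps)
  have "-(t/u^2) + t/v^2 = t * (u^2 - v^2)/(u * v)^2"
    using u0 by (simp add: field_simps power2_eq_square)
  also have "\<dots> = -(4 * t^2)/(u * v)^2" unfolding d by (simp add: power2_eq_square)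
  also have "\<dots> \<le> -(4 * t^2)"
  proof -
    have "(u* v)^2 \<le> 1" using uv by (simp add: power_le_one)
    then have "4 * t^2 \<le> 4 * t^2/(u* v)^2" using uv t u0 by (simp add: le_divide_eq)
    then show ?thesis by simp
  qed
  finally have a: "-(t/u^2) + t/v^2 \<le> -(4 * t^2)" .
  have b: "4 * t * t * icub(t * t+1) \<le> 4 * t * t" using X t by (simp add: mult_left_le)
  have "Co t \<le> 0" unfolding oct_Cform[OF t t1] using a b unfolding u_def v_def by (simp add: power2_eq_square)
  also have "0 < t^2 * Ao" using oct_A t by simp
  finally show ?thesis .
qed

lemma oct_Bform: assumes t: "0 < t" and t1: "t < 1"
  shows "t^3 * Bo t = t^3/(1-t)^2 + t^3/(1+t)^2 + 4 * (t^3 * icub(t * t+1))"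
proof -
  define u where "u = 1 - t"
  define v where "v = 1 + t"
  have u0: "u \<noteq> 0" "v \<noteq> 0" using t t1 u_def v_def by auto
  have e1: "t^3 * (u * (1/u^3)) = t^3/u^2" using u0 by (simp add: field_simps power3_eq_cube power2_eq_square)
  have e2: "t^3 * (v * (1/v^3)) = t^3/v^2" using u0 by (simp add: field_simps power3_eq_cube power2_eq_square)
  define Y where "Y = icub(t * t+1)"
  have "t^3 * Bo t = t^3 * (u * (1/u^3)) + t^3 * (v * (1/v^3)) + 4 * (t^3 * Y)"
    unfolding Bo_def oct_self[OF t1] oct_anti[OF t] Y_def[symmetric] u_def[symmetric] v_def[symmetric]
    by (simp add: algebra_simps)
  also have "\<dots> = t^3/u^2 + t^3/v^2 + 4 * (t^3 * Y)" using e1 e2 by simp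
  finally show ?thesis unfolding u_def v_def Y_def .
qed

lemma cube_over_sq_mono: fixes s t :: real assumes s: "0 < s" and st: "s < t"
  shows "s^3/(1+s)^2 < t^3/(1+t)^2"
proof -
  have e: "x^3/(1+x)^2 = x * (x/(1+x))^2" if "0 < x" for x :: real
    using that by (simp add: power2_eq_square power3_eq_cube field_simps)
  have f: "s/(1+s) < t/(1+t)" using s st by (simp add: divide_simps algebra_simps)
  have f0: "0 \<le> s/(1+s)" using s by simp
  have "(s/(1+s))^2 < (t/(1+t))^2" using f f0 by (simp add: power_strict_mono)
  then have "s * (s/(1+s))^2 < t * (t/(1+t))^2" using s st by (intro mult_strict_mono) auto
  then show ?thesis using e[OF s] e[of t] s st by simp
qed

lemma oct_mono: assumes s: "0 < s" and st: "s < t" and t1: "t < 1" shows "s^3 * Bo s < t^3 * Bo t"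
proof -
  have t: "0 < t" "s < 1" using s st t1 by auto
  have ws: "0 < s* s+1" using s by (simp add: add_pos_pos)
  have wt: "0 < t * t+1" using t by (simp add: add_pos_pos)
  have F: "s^2/(s* s+1) < t^2/(t * t+1)"
    using frac_mono[OF s st t1, of 1 0] by simp
  have F0: "0 < s^2/(s* s+1)" using s ws by simp
  have G: "s^3 * icub(s* s+1) < t^3 * icub(t * t+1)"
    unfolding t3icub[OF s ws] t3icub[OF t(1) wt] using xsqrt_mono[OF F0 F] .
  have I: "s^3/(1-s)^2 < t^3/(1-t)^2"
  proof (rule frac_less)
    show "0 \<le> s^3" using s by simp
    show "s^3 < t^3" using s st by (simp add: power_strict_mono)
    show "0 < (1-t)^2" using t1 by simp
    show "(1-t)^2 \<le> (1-s)^2" using st t1 s by (intro power_mono) auto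
  qed
  have J: "s^3/(1+s)^2 < t^3/(1+t)^2" by (rule cube_over_sq_mono[OF s st])
  show ?thesis unfolding oct_Bform[OF s t(2)] oct_Bform[OF t(1) t1] using G I J by simp
qed

lemma oct_h0: "(1/10)^3 * Bo (1/10) < Ao"
proof -
  have B: "(1/10::real)^3 * Bo (1/10) = (1/10)^3/(1-1/10)^2 + (1/10)^3/(1+1/10)^2 + 4 * ((1/10)^3 * icub((1/10) * (1/10)+1))"
    by (rule oct_Bform) simp_all
  have w: "icub ((1/10) * (1/10)+1) \<le> 1" by (rule icub_le1) simp
  have b: "4 * ((1/10::real)^3 * icub ((1/10) * (1/10)+1)) \<le> 4 * ((1/10)^3 * 1)"
    using w by (intro mult_left_mono) auto
  have c: "(1/10::real)^3/(1-1/10)^2 + (1/10)^3/(1+1/10)^2 + 4 * ((1/10)^3 * 1) < 1" by (simp add: power_divide)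
  show ?thesis using B b c oct_A(1) by linarith
qed

lemma oct_h1: "Ao < (9/10)^3 * Bo (9/10)"
proof -
  have B: "(9/10::real)^3 * Bo (9/10) = (9/10)^3/(1-9/10)^2 + (9/10)^3/(1+9/10)^2 + 4 * ((9/10)^3 * icub((9/10) * (9/10)+1))"
    by (rule oct_Bform) simp_all
  have w: "0 \<le> 4 * ((9/10::real)^3 * icub((9/10) * (9/10)+1))"
    using icub_pos[of "(9/10) * (9/10)+1"] by simp
  have w2: "0 \<le> (9/10::real)^3/(1+9/10)^2" by simp
  have c: "6 < (9/10::real)^3/(1-9/10)^2" by (simp add: power_divide)
  show ?thesis using B w w2 c oct_A(2) by linarith
qed

lemma oct_cont: "continuous_on {1/10..9/10} (\<lambda>t. t^3 * Bo t)"
  unfolding Bo_def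
proof (intro continuous_intros icub_cont)
  fix x :: real assume x: "x \<in> {1/10..9/10}"
  have "x * x - 2 * x + 1 = (1-x)^2" by (simp add: power2_eq_square algebra_simps)
  then show "0 < x * x - 2 * x + 1" using x by simp
  show "0 < x * x + 2 * x + 1" using x by (simp add: add_pos_pos)
  show "0 < x * x + 1" using x by (simp add: add_pos_pos)
qed


definition "cubeM (\<mu>::real) = [1,1,1,1,1,1,1,1,\<mu>,\<mu>,\<mu>,\<mu>,\<mu>,\<mu>,\<mu>,\<mu>]"
definition "Ac = 6 * icub 4 + 12 * icub 8 + 6 * icub 12"
definition "Bc t = (3-3*t)*icub(t*t*3 - 6*t + 3) + (3+3*t)*icub(t*t*3 + 6*t + 3) + 3*(3-t)*icub(t*t*3 - 2*t + 3) + 3*(3+t)*icub(t*t*3 + 2*t + 3)"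
definition "Cc t = t*(3*t-3)*icub(t*t*3 - 6*t + 3) + t*(3*t+3)*icub(t*t*3 + 6*t + 3) + 3*t*(3*t-1)*icub(t*t*3 - 2*t + 3) + 3*t*(3*t+1)*icub(t*t*3 + 2*t + 3)"

lemma cube_E0:
  assumes t: "0 < t" shows "\<forall>x. E (nested cube t) (cubeM \<mu>) c 0 $ x * 3 = pt 1 1 1 $ x * (24*c*(1+\<mu>) - Ac - \<mu> * Bc t)"
  unfolding forall_3
  apply (intro conjI)
  apply (simp_all add: E_def nested_def cube_def cubeM_def Ac_def Bc_def sum16 pt_diff_in inner3 sum_component t)
  apply algebra+
  done

lemma cube_En:
  assumes t: "0 < t" shows "\<forall>x. E (nested cube t) (cubeM \<mu>) c 8 $ x * (3 * t) = pt 1 1 1 $ x * (24*c*t^2*(1+\<mu>) - Cc t - \<mu> * Ac / t)"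
  unfolding forall_3
  apply (intro conjI)
  apply (simp_all add: E_def nested_def cube_def cubeM_def Ac_def Cc_def sum16 pt_diff_in inner3 sum_component t)
  apply (simp_all add: field_simps t power3_eq_cube less_imp_neq[OF t, symmetric])
  apply algebra+
  done

lemma cube_ex:
  assumes t: "0 < t" and t1: "t < 1" and mu: "0 < \<mu>"
    and eq1: "24*c*(1+\<mu>) = Ac + \<mu>*Bc t" and eq2: "24*c*t^2*(1+\<mu>) = Cc t + \<mu>*Ac/t"
  shows "\<exists>m. length m = 2*length cube \<and> (\<forall>x\<in>set m. 0<x) \<and> central_configuration (nested cube t) m"
proof (intro exI conjI)
  let ?Q = "nested cube t" and ?M = "cubeM \<mu>"
  have lq: "length ?Q = 16" by (simp add: nested_def cube_def)
  have E0: "E ?Q ?M c 0 = 0"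
  proof -
    have z: "24*c*(1+\<mu>) - Ac - \<mu> * Bc t = 0" using eq1 by simp
    have "E ?Q ?M c 0 $ x * 3 = 0" for x using spec[OF cube_E0[OF t, of \<mu> c], of x] unfolding z by simp
    then show ?thesis by (simp add: vec_eq_iff)
  qed
  have En: "E ?Q ?M c 8 = 0"
  proof -
    have z: "24*c*t^2*(1+\<mu>) - Cc t - \<mu> * Ac / t = 0" using eq2 by simp
    have "E ?Q ?M c 8 $ x * (3 * t) = 0" for x using spec[OF cube_En[OF t, of \<mu> c], of x] unfolding z by simp
    then show ?thesis using t by (simp add: vec_eq_iff)
  qed
  have ms: "\<forall>j<length ?Q. ?M!(l!j) = ?M!j" if "l \<in> {[1, 0, 3, 2, 5, 4, 7, 6, 9, 8, 11, 10, 13, 12, 15, 14], [2, 3, 0, 1, 6, 7, 4, 5, 10, 11, 8, 9, 14, 15, 12, 13], [3, 2, 1, 0, 7, 6, 5, 4, 11, 10, 9, 8, 15, 14, 13, 12], [4, 5, 6, 7, 0, 1, 2, 3, 12, 13, 14, 15, 8, 9, 10, 11], [5, 4, 7, 6, 1, 0, 3, 2, 13, 12, 15, 14, 9, 8, 11, 10], [6, 7, 4, 5, 2, 3, 0, 1, 14, 15, 12, 13, 10, 11, 8, 9], [7, 6, 5, 4, 3, 2, 1, 0, 15, 14, 13, 12, 11, 10, 9, 8]}" for l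
    using that unfolding lq all16 by (auto simp: cubeM_def)
  have S0: "E ?Q ?M c ([1, 0, 3, 2, 5, 4, 7, 6, 9, 8, 11, 10, 13, 12, 15, 14]!i) = 0" if "i \<in> {0,8}" for i
    apply (rule sym_zero[where sa="1" and sb="1" and sc="-1" and pa=1 and pb=2 and pc=3])
    apply (simp; fail)
    apply (simp add: lq; fail)
    apply (simp add: lq; fail)
    apply (unfold lq all16, simp add: nested_def cube_def; fail)
    apply (rule ms, simp)
    apply (simp_all add: lq)
    using that E0 En by auto
  have S1: "E ?Q ?M c ([2, 3, 0, 1, 6, 7, 4, 5, 10, 11, 8, 9, 14, 15, 12, 13]!i) = 0" if "i \<in> {0,8}" for i
    apply (rule sym_zero[where sa="1" and sb="-1" and sc="1" and pa=1 and pb=2 and pc=3])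
    apply (simp; fail)
    apply (simp add: lq; fail)
    apply (simp add: lq; fail)
    apply (unfold lq all16, simp add: nested_def cube_def; fail)
    apply (rule ms, simp)
    apply (simp_all add: lq)
    using that E0 En by auto
  have S2: "E ?Q ?M c ([3, 2, 1, 0, 7, 6, 5, 4, 11, 10, 9, 8, 15, 14, 13, 12]!i) = 0" if "i \<in> {0,8}" for i
    apply (rule sym_zero[where sa="1" and sb="-1" and sc="-1" and pa=1 and pb=2 and pc=3])
    apply (simp; fail)
    apply (simp add: lq; fail)
    apply (simp add: lq; fail)
    apply (unfold lq all16, simp add: nested_def cube_def; fail)
    apply (rule ms, simp)
    apply (simp_all add: lq)
    using that E0 En by auto
  have S3: "E ?Q ?M c ([4, 5, 6, 7, 0, 1, 2, 3, 12, 13, 14, 15, 8, 9, 10, 11]!i) = 0" if "i \<in> {0,8}" for i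
    apply (rule sym_zero[where sa="-1" and sb="1" and sc="1" and pa=1 and pb=2 and pc=3])
    apply (simp; fail)
    apply (simp add: lq; fail)
    apply (simp add: lq; fail)
    apply (unfold lq all16, simp add: nested_def cube_def; fail)
    apply (rule ms, simp)
    apply (simp_all add: lq)
    using that E0 En by auto
  have S4: "E ?Q ?M c ([5, 4, 7, 6, 1, 0, 3, 2, 13, 12, 15, 14, 9, 8, 11, 10]!i) = 0" if "i \<in> {0,8}" for i
    apply (rule sym_zero[where sa="-1" and sb="1" and sc="-1" and pa=1 and pb=2 and pc=3])
    apply (simp; fail)
    apply (simp add: lq; fail)
    apply (simp add: lq; fail)
    apply (unfold lq all16, simp add: nested_def cube_def; fail)
    apply (rule ms, simp)
    apply (simp_all add: lq)
    using that E0 En by auto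
  have S5: "E ?Q ?M c ([6, 7, 4, 5, 2, 3, 0, 1, 14, 15, 12, 13, 10, 11, 8, 9]!i) = 0" if "i \<in> {0,8}" for i
    apply (rule sym_zero[where sa="-1" and sb="-1" and sc="1" and pa=1 and pb=2 and pc=3])
    apply (simp; fail)
    apply (simp add: lq; fail)
    apply (simp add: lq; fail)
    apply (unfold lq all16, simp add: nested_def cube_def; fail)
    apply (rule ms, simp)
    apply (simp_all add: lq)
    using that E0 En by auto
  have S6: "E ?Q ?M c ([7, 6, 5, 4, 3, 2, 1, 0, 15, 14, 13, 12, 11, 10, 9, 8]!i) = 0" if "i \<in> {0,8}" for i
    apply (rule sym_zero[where sa="-1" and sb="-1" and sc="-1" and pa=1 and pb=2 and pc=3])
    apply (simp; fail)
    apply (simp add: lq; fail)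
    apply (simp add: lq; fail)
    apply (unfold lq all16, simp add: nested_def cube_def; fail)
    apply (rule ms, simp)
    apply (simp_all add: lq)
    using that E0 En by auto
  have "\<forall>i<16. E ?Q ?M c i = 0"
    unfolding all16 using E0 En S0[of 0] S0[of 8] S1[of 0] S1[of 8] S2[of 0] S2[of 8] S3[of 0] S3[of 8] S4[of 0] S4[of 8] S5[of 0] S5[of 8] S6[of 0] S6[of 8] by simp
  moreover have "distinct ?Q" using t t1 by (simp add: nested_def cube_def pt_scale)
  ultimately show "central_configuration ?Q ?M" unfolding cc_iff lq by (auto simp: cubeM_def nested_def cube_def)
  show "length ?M = 2 * length cube" by (simp add: cubeM_def cube_def)
  show "\<forall>x\<in>set ?M. 0 < x" using mu by (simp add: cubeM_def)
qed

lemma cube_Kc: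
  assumes t: "0 < t" shows "\<forall>j<16. Kc (nested cube t) c t j = (if j < 8 then Cc t - t^2*Ac else Ac/t - t^2*Bc t)"
  unfolding all16
  apply (intro conjI)
  apply (simp_all add: Kc_def nested_def cube_def Ac_def Bc_def Cc_def sum16 pt_diff_in inner3 t)
  apply (simp_all add: field_simps t power3_eq_cube power2_eq_square less_imp_neq[OF t, symmetric])
  done

lemma cube_nex:
  assumes t: "0 < t" and t1: "t < 1" and lm: "length m = 2*length cube" and pos: "\<forall>x\<in>set m. 0<x"
    and cc: "central_configuration (nested cube t) m"
  shows "\<exists>Mo Mi. 0<Mo \<and> 0<Mi \<and> Mo*(Cc t - t^2*Ac) + Mi*(Ac/t - t^2*Bc t) = 0"
proof -
  let ?Q = "nested cube t"
  have lq: "length ?Q = 16" by (simp add: nested_def cube_def)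
  have lmN: "length m = 16" using lm by (simp add: cube_def)
  obtain c where c: "\<forall>i<16. E ?Q m c i = 0" using cc unfolding cc_iff lq by blast
  have "0 = (\<Sum>i<length ?Q. (if 2*i < length ?Q then t^2 else -1) * inner (E ?Q m c i) (?Q!i))"
    using c unfolding lq by simp
  also have "\<dots> = (\<Sum>j<length ?Q. m!j * Kc ?Q c t j)" by (rule Kc_sum)
  also have "\<dots> = (\<Sum>j<16. m!j * (if j < 8 then Cc t - t^2*Ac else Ac/t - t^2*Bc t))"
    using cube_Kc[OF t, of c] unfolding lq by (intro sum.cong) auto
  also have "\<dots> = (m!0+m!1+m!2+m!3+m!4+m!5+m!6+m!7)*(Cc t - t^2*Ac) + (m!8+m!9+m!10+m!11+m!12+m!13+m!14+m!15)*(Ac/t - t^2*Bc t)"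
    unfolding sum16 by (simp add: algebra_simps)
  finally have eq: "(m!0+m!1+m!2+m!3+m!4+m!5+m!6+m!7)*(Cc t - t^2*Ac) + (m!8+m!9+m!10+m!11+m!12+m!13+m!14+m!15)*(Ac/t - t^2*Bc t) = 0" by simp
  have mp: "0 < m!j" if "j < 16" for j using pos nth_mem[of j m] that lmN by auto
  show ?thesis
    by (rule exI[of _ "m!0+m!1+m!2+m!3+m!4+m!5+m!6+m!7"], rule exI[of _ "m!8+m!9+m!10+m!11+m!12+m!13+m!14+m!15"])
       (use eq mp[of 0] mp[of 1] mp[of 2] mp[of 3] mp[of 4] mp[of 5] mp[of 6] mp[of 7] mp[of 8] mp[of 9] mp[of 10] mp[of 11] mp[of 12] mp[of 13] mp[of 14] mp[of 15] in auto)
qed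


lemma cube_anti: assumes "0 < t" shows "icub (t * t * 3 + 6 * t + 3) = 1/(3 * sqrt 3 * (1+t)^3)"
proof -
  have "t * t * 3 + 6 * t + 3 = 3 * (1+t)^2" by (simp add: power2_eq_square algebra_simps)
  then have "icub (t * t * 3 + 6 * t + 3) = 1 / sqrt (3 * (1+t)^2) ^ 3" unfolding icub_def by simp
  also have "sqrt (3 * (1+t)^2) = sqrt 3 * (1+t)" using assms by (simp add: real_sqrt_mult)
  also have "(sqrt 3 * (1+t))^3 = sqrt 3 ^ 3 * (1+t)^3"
    by (simp only: power_mult_distrib)
  also have "sqrt 3 ^ 3 = 3 * sqrt 3" by (simp add: power3_eq_cube)
  finally show ?thesis .
qed

lemma cube_A: "12/(5 * sqrt 3) \<le> Ac" "Ac \<le> 24"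
proof -
  have i4: "icub 4 = 1/8" by (simp add: icub_alt)
  have s12: "sqrt 12 = 2 * sqrt 3" using real_sqrt_mult[of 4 3] by simp
  have i12: "6 * icub 12 = 1/(4 * sqrt 3)" unfolding icub_alt[of 12, simplified] s12 by simp
  have i8: "9/(10 * sqrt 3) \<le> 12 * icub 8" using tet_A(1) unfolding At_def .
  have r: "5/3 \<le> sqrt 3" by (rule real_le_rsqrt) (simp add: power2_eq_square)
  have "12/(5 * sqrt 3) \<le> 3/4 + 9/(10 * sqrt 3) + 1/(4 * sqrt 3)"
    using r by (simp add: divide_simps)
  then show "12/(5 * sqrt 3) \<le> Ac" unfolding Ac_def using i4 i8 i12 by linarith
  have "icub 4 \<le> 1" "icub 8 \<le> 1" "icub 12 \<le> 1" by (rule icub_le1, simp)+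
  then show "Ac \<le> 24" unfolding Ac_def by simp
qed

lemma cancel_aux: "(A::real) \<noteq> 0 \<Longrightarrow> (A * B) * (c/A) = B * c"
  by simp

lemma cube_poly: fixes t :: real assumes t: "0 < t" and t1: "t < 1"
  shows "9 * t * ((t * t * 3 - 2 * t + 3)+3)/(2 * (t * t * 3 - 2 * t + 3)^2) - 18/((t * t * 3 - 2 * t + 3) * ((t * t * 3 - 2 * t + 3)+3))
     + 3 * (3 * t+1) * ((t * t * 3 + 2 * t + 3)+3)/(2 * (t * t * 3 + 2 * t + 3)^2) < 12 * t/5 + 1/(1-t)^2 - 1/(1+t)^2"
proof -
  define wm where "wm = t * t * 3 - 2 * t + 3"
  define wp where "wp = t * t * 3 + 2 * t + 3"
  define u where "u = 1 - t"
  define v where "v = 1 + t"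
  have wm0: "0 < wm"
  proof -
    have "wm = 3 * (t - 1/3)^2 + 8/3" unfolding wm_def by (simp add: power2_eq_square algebra_simps)
    then show ?thesis by (simp add: add_nonneg_pos)
  qed
  have wm3: "wm * wm + wm * 3 \<noteq> 0"
  proof -
    have "0 < wm * wm + wm * 3" using wm0 by (intro add_pos_pos mult_pos_pos) auto
    then show ?thesis by simp
  qed
  have wp0: "0 < wp" unfolding wp_def using t by (simp add: add_pos_pos)
  have u0: "0 < u" "0 < v" using t t1 u_def v_def by auto
  define Q where "Q = (11664/5) * t^0 * (1-t)^14 + (158868/5) * t^1 * (1-t)^13 + (1061532/5) * t^2 * (1-t)^12 + (4576101/5) * t^3 * (1-t)^11 + (14193153/5) * t^4 * (1-t)^10 + (33498823/5) * t^5 * (1-t)^9 + (61946463/5) * t^6 * (1-t)^8 + (90809856/5) * t^7 * (1-t)^7 + (105418476/5) * t^8 * (1-t)^6 + (19159152/1) * t^9 * (1-t)^5 + (66647424/5) * t^10 * (1-t)^4 + (6844992/1) * t^11 * (1-t)^3 + (12208128/5) * t^12 * (1-t)^2 + (540672/1) * t^13 * (1-t)^1 + (57344/1) * t^14 * (1-t)^0"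
  have Q0: "0 < Q" unfolding Q_def using t t1
    by (intro add_pos_nonneg mult_pos_pos mult_nonneg_nonneg zero_less_power zero_le_power) auto
  define M where "M = (24/5) * t * u^2 * v^2 * wm^2 * (wm+3) * wp^2 + 2 * v^2 * wm^2 * (wm+3) * wp^2
     - 2 * u^2 * wm^2 * (wm+3) * wp^2 - 9 * t * (wm+3)^2 * u^2 * v^2 * wp^2 + 36 * u^2 * v^2 * wm * wp^2
     - 3 * (3 * t+1) * (wp+3) * u^2 * v^2 * wm^2 * (wm+3)"
  have MQ: "M = t * Q" unfolding M_def Q_def wm_def wp_def u_def v_def by algebra
  have M0: "0 < M" unfolding MQ using t Q0 by simp
  define D where "D = 2 * u^2 * v^2 * wm^2 * (wm+3) * wp^2"
  have D0: "0 < D" unfolding D_def using u0 wm0 wp0 by (simp add: add_pos_pos)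
  have d1: "D * (12 * t/5) = (24/5) * t * u^2 * v^2 * wm^2 * (wm+3) * wp^2" unfolding D_def by simp
  have d2: "D * (1/u^2) = 2 * v^2 * wm^2 * (wm+3) * wp^2" unfolding D_def using u0 by (simp add: field_simps)
  have d3: "D * (1/v^2) = 2 * u^2 * wm^2 * (wm+3) * wp^2" unfolding D_def using u0 by (simp add: field_simps)
  have d4: "D * (9 * t * (wm+3)/(2 * wm^2)) = 9 * t * (wm+3)^2 * u^2 * v^2 * wp^2"
    unfolding D_def using wm0 by (simp add: field_simps power2_eq_square)
  have d5: "D * (18/(wm * (wm+3))) = 36 * u^2 * v^2 * wm * wp^2"
  proof -
    have nz: "wm * (wm + 3) \<noteq> 0" using wm0 by simp
    have Deq: "D = (wm * (wm+3)) * (2 * u^2 * v^2 * wm * wp^2)" unfolding D_def by (simp add: power2_eq_square algebra_simps)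
    have "D * (18/(wm * (wm+3))) = (2 * u^2 * v^2 * wm * wp^2) * 18" unfolding Deq by (rule cancel_aux[OF nz])
    then show ?thesis by simp
  qed
  have d6: "D * (3 * (3 * t+1) * (wp+3)/(2 * wp^2)) = 3 * (3 * t+1) * (wp+3) * u^2 * v^2 * wm^2 * (wm+3)"
    unfolding D_def using wp0 by (simp add: field_simps power2_eq_square)
  have "D * ((12 * t/5 + 1/u^2 - 1/v^2) - (9 * t * (wm+3)/(2 * wm^2) - 18/(wm * (wm+3)) + 3 * (3 * t+1) * (wp+3)/(2 * wp^2))) = M"
  proof -
    have gen: "\<And>D a b c x y z. (D::real) * ((a + b - c) - (x - y + z)) = D * a + D * b - D * c - (D * x - D * y + D * z)"
      by (simp add: algebra_simps)
    show ?thesis unfolding gen d1 d2 d3 d4 d5 d6 M_def by linarith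
  qed
  then have "0 < (12 * t/5 + 1/u^2 - 1/v^2) - (9 * t * (wm+3)/(2 * wm^2) - 18/(wm * (wm+3)) + 3 * (3 * t+1) * (wp+3)/(2 * wp^2))"
    using M0 D0 by (metis zero_less_mult_pos)
  then show ?thesis unfolding wm_def[symmetric] wp_def[symmetric] u_def[symmetric] v_def[symmetric] by linarith
qed


lemma cube_wm_pos: "0 < (t::real) * t * 3 - 2 * t + 3"
proof -
  have "t * t * 3 - 2 * t + 3 = 3 * (t - 1/3)^2 + 8/3" by (simp add: power2_eq_square algebra_simps)
  then show ?thesis by (simp add: add_nonneg_pos)
qed

lemma cube_g1: assumes t: "0 < t" and t1: "t < 1" shows "Cc t < t^2 * Ac"
proof -
  define r where "r = sqrt 3"
  have r0: "0 < r" "r^2 = 3" unfolding r_def using sqrt3_bounds by auto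
  define wm where "wm = t * t * 3 - 2 * t + 3"
  define wp where "wp = t * t * 3 + 2 * t + 3"
  have wm0: "0 < wm" unfolding wm_def by (rule cube_wm_pos)
  have wp0: "0 < wp" unfolding wp_def using t by (simp add: add_pos_pos)
  define u where "u = 1 - t"
  define v where "v = 1 + t"
  have u0: "0 < u" "0 < v" using t t1 u_def v_def by auto
  define Xm where "Xm = icub wm"
  define Xp where "Xp = icub wp"
  have Cf0: "Cc t = t * (3 * t - 3) * (1/(3 * r * u^3)) + t * (3 * t + 3) * (1/(3 * r * v^3)) + 3 * t * (3 * t - 1) * Xm + 3 * t * (3 * t + 1) * Xp"
    unfolding Cc_def tet_self[OF t1] cube_anti[OF t] Xm_def Xp_def wm_def wp_def r_def u_def v_def by simp
  have "3 * t - 3 = -3 * u" unfolding u_def by simp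
  then have "t * (3 * t - 3) * (1/(3 * r * u^3)) = t * (-3 * u) * (1/(3 * r * u^3))" by simp
  also have "\<dots> = -((t/r) * (1/u^2))"
    using u0 r0 by (simp add: field_simps power3_eq_cube power2_eq_square)
  finally have e1: "t * (3 * t - 3) * (1/(3 * r * u^3)) = -((t/r) * (1/u^2))" .
  have "3 * t + 3 = 3 * v" unfolding v_def by simp
  then have "t * (3 * t + 3) * (1/(3 * r * v^3)) = t * (3 * v) * (1/(3 * r * v^3))" by simp
  also have "\<dots> = (t/r) * (1/v^2)"
    using u0 r0 by (simp add: field_simps power3_eq_cube power2_eq_square)
  finally have e2: "t * (3 * t + 3) * (1/(3 * r * v^3)) = (t/r) * (1/v^2)" .
  have XmU: "Xm \<le> (wm+3)/(2 * r * wm^2)" unfolding Xm_def using icub_up[OF wm0 r0(1)] r0(2) by simp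
  have XmL: "2 * r/(wm * (wm+3)) \<le> Xm" unfolding Xm_def using icub_low[OF wm0 r0(1)] r0(2) by simp
  have XpU: "Xp \<le> (wp+3)/(2 * r * wp^2)" unfolding Xp_def using icub_up[OF wp0 r0(1)] r0(2) by simp
  have m1: "3 * t * (3 * t - 1) * Xm = 9 * t^2 * Xm - 3 * t * Xm" by (simp add: algebra_simps power2_eq_square)
  have m2: "9 * t^2 * Xm \<le> 9 * t^2 * ((wm+3)/(2 * r * wm^2))" using XmU t by (intro mult_left_mono) auto
  have m3: "3 * t * (2 * r/(wm * (wm+3))) \<le> 3 * t * Xm" using XmL t by (intro mult_left_mono) auto
  have m4: "3 * t * (3 * t + 1) * Xp \<le> 3 * t * (3 * t + 1) * ((wp+3)/(2 * r * wp^2))" using XpU t by (intro mult_left_mono) auto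
  have q2: "9 * t^2 * ((wm+3)/(2 * r * wm^2)) = (t/r) * (9 * t * (wm+3)/(2 * wm^2))"
    using r0 wm0 by (simp add: field_simps power2_eq_square)
  have q3: "3 * t * (2 * r/(wm * (wm+3))) = (t/r) * (18/(wm * (wm+3)))"
  proof -
    have "3 * t * (2 * r/(wm * (wm+3))) = (t/r) * (6 * (r * r)/(wm * (wm+3)))" using r0 by (simp add: field_simps)
    also have "r * r = 3" using r0 by (simp add: power2_eq_square)
    finally show ?thesis by simp
  qed
  have q4: "3 * t * (3 * t + 1) * ((wp+3)/(2 * r * wp^2)) = (t/r) * (3 * (3 * t+1) * (wp+3)/(2 * wp^2))"
    using r0 wp0 by (simp add: field_simps power2_eq_square)
  have "Cc t \<le> (t/r) * ((1/v^2 - 1/u^2) + (9 * t * (wm+3)/(2 * wm^2) - 18/(wm * (wm+3)) + 3 * (3 * t+1) * (wp+3)/(2 * wp^2)))"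
  proof -
    have gen2: "\<And>k p q x y z. (k::real) * ((p - q) + (x - y + z)) = k * p - k * q + k * x - k * y + k * z"
      by (simp add: algebra_simps)
    show ?thesis unfolding gen2 using Cf0 e1 e2 m1 m2 m3 m4 q2 q3 q4 by linarith
  qed
  also have "\<dots> < (t/r) * (12 * t/5)"
  proof (rule mult_strict_left_mono)
    show "(1/v^2 - 1/u^2) + (9 * t * (wm+3)/(2 * wm^2) - 18/(wm * (wm+3)) + 3 * (3 * t+1) * (wp+3)/(2 * wp^2)) < 12 * t/5"
      using cube_poly[OF t t1] unfolding wm_def[symmetric] wp_def[symmetric] u_def[symmetric] v_def[symmetric] by linarith
    show "0 < t/r" using t r0 by simp
  qed
  also have "\<dots> = t^2 * (12/(5 * r))" by (simp add: power2_eq_square)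
  also have "\<dots> \<le> t^2 * Ac" using cube_A(1) unfolding r_def by (intro mult_left_mono) auto
  finally show ?thesis .
qed

lemma cube_Bform: assumes t: "0 < t" and t1: "t < 1"
  shows "t^3 * Bc t = t^3/(sqrt 3 * (1-t)^2) + t^3/(sqrt 3 * (1+t)^2) + 3 * ((3-t) * (t^3 * icub(t * t * 3 - 2 * t + 3))) + 3 * (3+t) * (t^3 * icub(t * t * 3 + 2 * t + 3))"
proof -
  define u where "u = 1 - t"
  define v where "v = 1 + t"
  have u0: "u \<noteq> 0" "v \<noteq> 0" using t t1 u_def v_def by auto
  have e1: "t^3 * ((3 * u) * (1/(3 * sqrt 3 * u^3))) = t^3/(sqrt 3 * u^2)"
    using u0 by (simp add: field_simps power3_eq_cube power2_eq_square)
  have e2: "t^3 * ((3 * v) * (1/(3 * sqrt 3 * v^3))) = t^3/(sqrt 3 * v^2)"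
    using u0 by (simp add: field_simps power3_eq_cube power2_eq_square)
  have f1: "3 - 3 * t = 3 * u" "3 + 3 * t = 3 * v" unfolding u_def v_def by simp_all
  define Ym where "Ym = icub(t * t * 3 - 2 * t + 3)"
  define Yp where "Yp = icub(t * t * 3 + 2 * t + 3)"
  have "t^3 * Bc t = t^3 * ((3 * u) * (1/(3 * sqrt 3 * u^3))) + t^3 * ((3 * v) * (1/(3 * sqrt 3 * v^3))) + 3 * ((3-t) * (t^3 * Ym)) + 3 * (3+t) * (t^3 * Yp)"
    unfolding Bc_def tet_self[OF t1] cube_anti[OF t] Ym_def[symmetric] Yp_def[symmetric] f1[symmetric] u_def[symmetric] v_def[symmetric]
    by (simp add: algebra_simps)
  also have "\<dots> = t^3/(sqrt 3 * u^2) + t^3/(sqrt 3 * v^2) + 3 * ((3-t) * (t^3 * Ym)) + 3 * (3+t) * (t^3 * Yp)"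
    using e1 e2 by simp
  finally show ?thesis unfolding u_def v_def Ym_def Yp_def .
qed

lemma cube_tw_mono: fixes s t :: real assumes s: "0 < s" and st: "s < t" and t1: "t < 1"
  shows "s/(s * s * 3 - 2 * s + 3) < t/(t * t * 3 - 2 * t + 3)"
proof -
  have "t * (s * s * 3 - 2 * s + 3) - s * (t * t * 3 - 2 * t + 3) = 3 * (t - s) * (1 - t * s)"
    by (simp add: algebra_simps)
  moreover have "0 < 3 * (t - s) * (1 - t * s)"
  proof -
    have "t * s < 1" using s st t1 mult_strict_mono[of t 1 s 1] by simp
    then show ?thesis using st by simp
  qed
  ultimately have "s * (t * t * 3 - 2 * t + 3) < t * (s * s * 3 - 2 * s + 3)" by linarith
  then show ?thesis using cube_wm_pos[of s] cube_wm_pos[of t] by (simp add: divide_simps)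
qed

lemma cube_cubic_mono: fixes s t :: real assumes s: "0 < s" and st: "s < t" and t1: "t < 1"
  shows "s * (3-s)^2 < t * (3-t)^2"
proof -
  have "t * (3-t)^2 - s * (3-s)^2 = (t - s) * ((3 - t - s)^2 - t * s)"
    by (simp add: power2_eq_square algebra_simps)
  moreover have "0 < (t - s) * ((3 - t - s)^2 - t * s)"
  proof -
    have "t * s < 1" using s st t1 mult_strict_mono[of t 1 s 1] by simp
    moreover have "1 < 3 - t - s" using s st t1 by simp
    then have "1 < (3 - t - s)^2" by (metis one_less_power pos2)
    ultimately show ?thesis using st by simp
  qed
  ultimately show ?thesis by linarith
qed

lemma cube_Gform: fixes t w :: real assumes t: "0 < t" and t3: "t < 3" and w: "0 < w"
  shows "(3-t) * (t^3 * icub w) = (t^2/w) * sqrt ((t/w) * (t * (3-t)^2))"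
proof -
  have pos: "0 < t * (3-t)" using t t3 by simp
  have h1: "(t/w) * (t * (3-t)^2) = (t * (3-t))^2 / w" by (simp add: power2_eq_square)
  have h2: "sqrt ((t * (3-t))^2 / w) = t * (3-t) / sqrt w" using pos w by (simp add: real_sqrt_divide)
  have hh: "sqrt ((t/w) * (t * (3-t)^2)) = t * (3-t) / sqrt w" by (simp only: h1 h2)
  have sw: "0 < sqrt w" using w by simp
  show ?thesis unfolding hh icub_alt[OF w] using w sw by (simp add: field_simps power2_eq_square power3_eq_cube)
qed

lemma cube_mono: assumes s: "0 < s" and st: "s < t" and t1: "t < 1" shows "s^3 * Bc s < t^3 * Bc t"
proof -
  have t: "0 < t" "s < 1" using s st t1 by auto
  define wms where "wms = s * s * 3 - 2 * s + 3"
  define wmt where "wmt = t * t * 3 - 2 * t + 3"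
  have wms0: "0 < wms" "0 < wmt" unfolding wms_def wmt_def by (rule cube_wm_pos)+
  have ws: "0 < s * s * 3+2 * s+3" using s by (simp add: add_pos_pos)
  have wt: "0 < t * t * 3+2 * t+3" using t by (simp add: add_pos_pos)
  have F: "s^2/(s * s * 3+2 * s+3) < t^2/(t * t * 3+2 * t+3)"
    using frac_mono[OF s st t1, of 3 "-1"] by (simp add: algebra_simps)
  have F0: "0 < s^2/(s * s * 3+2 * s+3)" using s ws by simp
  have G: "s^3 * icub(s * s * 3+2 * s+3) < t^3 * icub(t * t * 3+2 * t+3)"
    unfolding t3icub[OF s ws] t3icub[OF t(1) wt] using xsqrt_mono[OF F0 F] .
  have G0: "0 \<le> s^3 * icub(s * s * 3+2 * s+3)" using s ws icub_pos[OF ws] by simp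
  have H: "3 * (3+s) * (s^3 * icub(s * s * 3+2 * s+3)) < 3 * (3+t) * (t^3 * icub(t * t * 3+2 * t+3))"
    using G G0 st s by (rule_tac mult_strict_mono) auto
  have I: "s^3/(sqrt 3 * (1-s)^2) < t^3/(sqrt 3 * (1-t)^2)"
  proof (rule frac_less)
    show "0 \<le> s^3" using s by simp
    show "s^3 < t^3" using s st by (simp add: power_strict_mono)
    show "0 < sqrt 3 * (1-t)^2" using t1 by simp
    show "sqrt 3 * (1-t)^2 \<le> sqrt 3 * (1-s)^2" using st t1 s by (intro mult_left_mono power_mono) auto
  qed
  have j1: "x^3/(sqrt 3 * (1+x)^2) = (x^3/(1+x)^2) / sqrt 3" for x :: real
    by (simp add: divide_divide_eq_left mult.commute)
  have J: "s^3/(sqrt 3 * (1+s)^2) < t^3/(sqrt 3 * (1+t)^2)"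
    unfolding j1 using divide_strict_right_mono[OF cube_over_sq_mono[OF s st], of "sqrt 3"] by simp
  have K1: "s^2/wms < t^2/wmt"
    using frac_mono[OF s st t1, of 3 1] unfolding wms_def wmt_def by (simp add: algebra_simps)
  have K2: "s/wms < t/wmt" using cube_tw_mono[OF s st t1] unfolding wms_def wmt_def .
  have K3: "s * (3-s)^2 < t * (3-t)^2" by (rule cube_cubic_mono[OF s st t1])
  have K4: "(s/wms) * (s * (3-s)^2) < (t/wmt) * (t * (3-t)^2)"
    using K2 K3 s t wms0 by (rule_tac mult_strict_mono) auto
  have K5: "sqrt ((s/wms) * (s * (3-s)^2)) < sqrt ((t/wmt) * (t * (3-t)^2))"
    using K4 by (rule real_sqrt_less_mono)
  have K60: "0 \<le> (s/wms) * (s * (3-s)^2)" using s wms0 by (intro mult_nonneg_nonneg) auto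
  have K6: "0 \<le> sqrt ((s/wms) * (s * (3-s)^2))" using K60 by simp
  have K7: "0 < s^2/wms" using s wms0 by simp
  have gs: "(3-s) * (s^3 * icub wms) = (s^2/wms) * sqrt ((s/wms) * (s * (3-s)^2))"
    by (rule cube_Gform) (use s st t1 wms0 in auto)
  have gt: "(3-t) * (t^3 * icub wmt) = (t^2/wmt) * sqrt ((t/wmt) * (t * (3-t)^2))"
    by (rule cube_Gform) (use t t1 wms0 in auto)
  have K8: "0 < t^2/wmt" using t wms0 by simp
  have K: "(3-s) * (s^3 * icub wms) < (3-t) * (t^3 * icub wmt)"
    unfolding gs gt by (rule mult_strict_mono[OF K1 K5 K8 K6])
  show ?thesis unfolding cube_Bform[OF s t(2)] cube_Bform[OF t(1) t1] using H I J K
    unfolding wms_def wmt_def by simp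
qed

lemma cube_h0: "(1/10)^3 * Bc (1/10) < Ac"
proof -
  have B: "(1/10::real)^3 * Bc (1/10) = (1/10)^3/(sqrt 3 * (1-1/10)^2) + (1/10)^3/(sqrt 3 * (1+1/10)^2)
     + 3 * ((3-1/10) * ((1/10)^3 * icub((1/10) * (1/10) * 3 - 2 * (1/10) + 3)))
     + 3 * (3+1/10) * ((1/10)^3 * icub((1/10) * (1/10) * 3+2 * (1/10)+3))"
    by (rule cube_Bform) simp_all
  have w1: "icub ((1/10) * (1/10) * 3 - 2 * (1/10) + 3) \<le> 1" by (rule icub_le1) simp
  have w2: "icub ((1/10) * (1/10) * 3+2 * (1/10)+3) \<le> 1" by (rule icub_le1) simp
  have a: "(1/10::real)^3/(sqrt 3 * (1-1/10)^2) \<le> (1/10)^3/(1 * (1-1/10)^2)"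
    using sqrt3_bounds by (intro divide_left_mono mult_right_mono) auto
  have a2: "(1/10::real)^3/(sqrt 3 * (1+1/10)^2) \<le> (1/10)^3/(1 * (1+1/10)^2)"
    using sqrt3_bounds by (intro divide_left_mono mult_right_mono) auto
  have b1: "3 * ((3-1/10) * ((1/10::real)^3 * icub ((1/10) * (1/10) * 3 - 2 * (1/10) + 3))) \<le> 3 * ((3-1/10) * ((1/10)^3 * 1))"
    using w1 by (intro mult_left_mono) auto
  have b2: "3 * (3+1/10) * ((1/10::real)^3 * icub ((1/10) * (1/10) * 3+2 * (1/10)+3)) \<le> 3 * (3+1/10) * ((1/10)^3 * 1)"
    using w2 by (intro mult_left_mono) auto
  have c: "(1/10::real)^3/(1 * (1-1/10)^2) + (1/10)^3/(1 * (1+1/10)^2) + 3 * ((3-1/10) * ((1/10)^3 * 1)) + 3 * (3+1/10) * ((1/10)^3 * 1) < 6/5"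
    by (simp add: power_divide)
  have d: "6/5 \<le> 12/(5 * sqrt 3)" using sqrt3_bounds by (simp add: divide_simps)
  show ?thesis using B a a2 b1 b2 c d cube_A(1) by linarith
qed

lemma cube_h1: "Ac < (9/10)^3 * Bc (9/10)"
proof -
  have B: "(9/10::real)^3 * Bc (9/10) = (9/10)^3/(sqrt 3 * (1-9/10)^2) + (9/10)^3/(sqrt 3 * (1+9/10)^2)
     + 3 * ((3-9/10) * ((9/10)^3 * icub((9/10) * (9/10) * 3 - 2 * (9/10) + 3)))
     + 3 * (3+9/10) * ((9/10)^3 * icub((9/10) * (9/10) * 3+2 * (9/10)+3))"
    by (rule cube_Bform) simp_all
  have w1: "0 \<le> 3 * ((3-9/10) * ((9/10::real)^3 * icub((9/10) * (9/10) * 3 - 2 * (9/10) + 3)))"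
    using icub_pos[of "(9/10) * (9/10) * 3 - 2 * (9/10) + 3"] by simp
  have w2: "0 \<le> 3 * (3+9/10) * ((9/10::real)^3 * icub((9/10) * (9/10) * 3+2 * (9/10)+3))"
    using icub_pos[of "(9/10) * (9/10) * 3+2 * (9/10)+3"] by simp
  have w3: "0 \<le> (9/10::real)^3/(sqrt 3 * (1+9/10)^2)" by simp
  have a: "(9/10::real)^3/(2 * (1-9/10)^2) \<le> (9/10)^3/(sqrt 3 * (1-9/10)^2)"
    using sqrt3_bounds by (intro divide_left_mono mult_right_mono) auto
  have c: "24 < (9/10::real)^3/(2 * (1-9/10)^2)" by (simp add: power_divide)
  show ?thesis using B w1 w2 w3 a c cube_A(2) by linarith
qed

lemma cube_cont: "continuous_on {1/10..9/10} (\<lambda>t. t^3 * Bc t)"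
  unfolding Bc_def
proof (intro continuous_intros icub_cont)
  fix x :: real assume x: "x \<in> {1/10..9/10}"
  have "x * x * 3 - 6 * x + 3 = 3 * (1-x)^2" by (simp add: power2_eq_square algebra_simps)
  then show "0 < x * x * 3 - 6 * x + 3" using x by simp
  show "0 < x * x * 3 + 6 * x + 3" using x by (simp add: add_pos_pos)
  show "0 < x * x * 3 - 2 * x + 3" by (rule cube_wm_pos)
  show "0 < x * x * 3 + 2 * x + 3" using x by (simp add: add_pos_pos)
qed


lemma tet_main: "\<exists>\<delta>::real. 0 < \<delta> \<and> \<delta> < 1 \<and>
      (\<forall>t. 0 < t \<and> t < \<delta> \<longrightarrow>
         (\<exists>m. length m = 2 * length tetrahedron \<and> (\<forall>x\<in>set m. 0 < x) \<and>
              central_configuration (nested tetrahedron t) m)) \<and>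
      (\<forall>t. \<delta> < t \<and> t < 1 \<longrightarrow>
         \<not> (\<exists>m. length m = 2 * length tetrahedron \<and> (\<forall>x\<in>set m. 0 < x) \<and>
              central_configuration (nested tetrahedron t) m))"
  by (rule generic[OF _ tet_ex tet_nex tet_g1 tet_mono _ _ _ tet_h0 tet_h1 tet_cont]) simp_all

lemma oct_main: "\<exists>\<delta>::real. 0 < \<delta> \<and> \<delta> < 1 \<and>
      (\<forall>t. 0 < t \<and> t < \<delta> \<longrightarrow>
         (\<exists>m. length m = 2 * length octahedron \<and> (\<forall>x\<in>set m. 0 < x) \<and>
              central_configuration (nested octahedron t) m)) \<and>
      (\<forall>t. \<delta> < t \<and> t < 1 \<longrightarrow>
         \<not> (\<exists>m. length m = 2 * length octahedron \<and> (\<forall>x\<in>set m. 0 < x) \<and>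
              central_configuration (nested octahedron t) m))"
  by (rule generic[OF _ oct_ex oct_nex oct_g1 oct_mono _ _ _ oct_h0 oct_h1 oct_cont]) simp_all

lemma cube_main: "\<exists>\<delta>::real. 0 < \<delta> \<and> \<delta> < 1 \<and>
      (\<forall>t. 0 < t \<and> t < \<delta> \<longrightarrow>
         (\<exists>m. length m = 2 * length cube \<and> (\<forall>x\<in>set m. 0 < x) \<and>
              central_configuration (nested cube t) m)) \<and>
      (\<forall>t. \<delta> < t \<and> t < 1 \<longrightarrow>
         \<not> (\<exists>m. length m = 2 * length cube \<and> (\<forall>x\<in>set m. 0 < x) \<and>
              central_configuration (nested cube t) m))"
  by (rule generic[OF _ cube_ex cube_nex cube_g1 cube_mono _ _ _ cube_h0 cube_h1 cube_cont]) simp_all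

theorem theorem14:
  shows "\<forall>P \<in> {tetrahedron, octahedron, cube}.
    \<exists>\<delta>::real. 0 < \<delta> \<and> \<delta> < 1 \<and>
      (\<forall>t. 0 < t \<and> t < \<delta> \<longrightarrow>
         (\<exists>m. length m = 2 * length P \<and> (\<forall>x\<in>set m. 0 < x) \<and>
              central_configuration (nested P t) m)) \<and>
      (\<forall>t. \<delta> < t \<and> t < 1 \<longrightarrow>
         \<not> (\<exists>m. length m = 2 * length P \<and> (\<forall>x\<in>set m. 0 < x) \<and>
              central_configuration (nested P t) m))"
proof
  fix P assume "P \<in> {tetrahedron, octahedron, cube}"
  then have "P = tetrahedron \<or> P = octahedron \<or> P = cube" by simp
  then show "\<exists>\<delta>::real. 0 < \<delta> \<and> \<delta> < 1 \<and>
      (\<forall>t. 0 < t \<and> t < \<delta> \<longrightarrow>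
         (\<exists>m. length m = 2 * length P \<and> (\<forall>x\<in>set m. 0 < x) \<and>
              central_configuration (nested P t) m)) \<and>
      (\<forall>t. \<delta> < t \<and> t < 1 \<longrightarrow>
         \<not> (\<exists>m. length m = 2 * length P \<and> (\<forall>x\<in>set m. 0 < x) \<and>
              central_configuration (nested P t) m))"
    using tet_main oct_main cube_main by (elim disjE) simp_all
qed


end
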